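(* Let $n\ge1$ and $T=\{\sigma\in L_{n+1}:\mathrm{des}_A(\sigma)=0\}$. (1) For every $B\subseteq[n+1]$ there exists a unique $\sigma\in T$ such that $B=\mathrm{Neg}(\sigma^{-1})$. (2) For every $B\subseteq[n+1]$, \[ \{\pi\in L_{n+1}:\mathrm{Neg}(\pi^{-1})\subseteq B\}=\biguplus_{u\in A_{n+1}}\{\sigma u:\sigma\in T,\ \mathrm{Neg}(\sigma^{-1})\subseteq B\}, \] where $\uplus$ denotes disjoint union.
   Context: $[a]=\{1,\dots,a\}$. For $m\ge1$, $B_m$ is the group of bijections $\sigma$ of $\{\pm1,\dots,\pm m\}$ with $\sigma(-i)=-\sigma(i)$, written in window notation $\sigma=[\sigma(1),\dots,\sigma(m)]$, with product $(\sigma\tau)(i)=\sigma(\tau(i))$. $S_m\subseteq B_m$ consists of the elements with all $\sigma(i)>0$, and $A_m\subseteq S_m$ is the alternating group. The Coxeter generators of $B_m$ are $s_0=[-1,2,\dots,m]$ and $s_i=$ the transposition of $i$ and $i+1$ ($1\le i\le m-1$); $\ell_B(\sigma)$ is the length of $\sigma$ with respect to $\{s_0,\dots,s_{m-1}\}$. For $\sigma\in B_m$ let $|\sigma|\in S_m$ be $i\mapsto|\sigma(i)|$, and $L_m=\{\sigma\in B_m:|\sigma|\in A_m\}$. $\mathrm{Neg}(\sigma)=\{i\in[m]:\sigma(i)<0\}$. $\mathrm{del}_B(\sigma)=\#\{2\le j\le m:\sigma(i)>\sigma(j)\text{ for all }1\le i<j\}$. $\ell_L(\sigma)=\ell_B(\sigma)-\mathrm{del}_B(\sigma)$.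 For $1\le i\le n-1$ let $a_i=s_1s_{i+1}$. For $\pi\in L_{n+1}$: $\mathrm{Des}_A(\pi)=\{1\le i\le n-1:\ell_L(\pi a_i)\le\ell_L(\pi)\}$ and $\mathrm{des}_A(\pi)=|\mathrm{Des}_A(\pi)|$. *)

theory Defs
  imports "HOL-Combinatorics.Permutations"
begin

text \<open>Signed permutations of \<open>{\<plusminus>1,...,\<plusminus>m}\<close> are represented as functions
  \<open>int \<Rightarrow> int\<close> that are the identity outside \<open>{\<plusminus>1,...,\<plusminus>m}\<close>.
  The product \<open>\<sigma>\<tau>\<close> is \<open>\<sigma> \<circ> \<tau>\<close>, the inverse is \<open>inv \<sigma>\<close>.\<close>

definition signset :: "nat \<Rightarrow> int set" where
  "signset m = {- int m..int m} - {0}"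

definition Bgrp :: "nat \<Rightarrow> (int \<Rightarrow> int) set" where
  "Bgrp m = {\<sigma>. bij_betw \<sigma> (signset m) (signset m) \<and> (\<forall>i. \<sigma> (- i) = - \<sigma> i)
                 \<and> (\<forall>x. x \<notin> signset m \<longrightarrow> \<sigma> x = x)}"

definition Sgrp :: "nat \<Rightarrow> (int \<Rightarrow> int) set" where
  "Sgrp m = {\<sigma> \<in> Bgrp m. \<forall>i\<in>{1..int m}. \<sigma> i > 0}"

definition Agrp :: "nat \<Rightarrow> (int \<Rightarrow> int) set" where
  "Agrp m = {\<sigma> \<in> Sgrp m. evenperm (\<lambda>x. if 0 < x then \<sigma> x else x)}"

definition absperm :: "(int \<Rightarrow> int) \<Rightarrow> int \<Rightarrow> int" where
  "absperm \<sigma> x = sgn x * \<bar>\<sigma> \<bar>x\<bar>\<bar>"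

definition Lset :: "nat \<Rightarrow> (int \<Rightarrow> int) set" where
  "Lset m = {\<sigma> \<in> Bgrp m. absperm \<sigma> \<in> Agrp m}"

definition Neg :: "nat \<Rightarrow> (int \<Rightarrow> int) \<Rightarrow> int set" where
  "Neg m \<sigma> = {i \<in> {1..int m}. \<sigma> i < 0}"

definition sgen :: "int \<Rightarrow> int \<Rightarrow> int" where
  "sgen i x = (if i = 0 then (if \<bar>x\<bar> = 1 then - x else x)
     else if x = i then i + 1 else if x = i + 1 then i
     else if x = - i then - (i + 1) else if x = - (i + 1) then - i else x)"

definition wordprod :: "int list \<Rightarrow> int \<Rightarrow> int" where
  "wordprod w = foldr (\<lambda>j f. sgen j \<circ> f) w id"

definition lenB :: "nat \<Rightarrow> (int \<Rightarrow> int) \<Rightarrow> nat" where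
  "lenB m \<sigma> = (LEAST k. \<exists>w. length w = k \<and> set w \<subseteq> {0..int m - 1} \<and> wordprod w = \<sigma>)"

definition delB :: "nat \<Rightarrow> (int \<Rightarrow> int) \<Rightarrow> nat" where
  "delB m \<sigma> = card {j \<in> {2..int m}. \<forall>i \<in> {1..<j}. \<sigma> i > \<sigma> j}"

definition lenL :: "nat \<Rightarrow> (int \<Rightarrow> int) \<Rightarrow> int" where
  "lenL m \<sigma> = int (lenB m \<sigma>) - int (delB m \<sigma>)"

definition agen :: "int \<Rightarrow> int \<Rightarrow> int" where
  "agen i = sgen 1 \<circ> sgen (i + 1)"

definition DesA :: "nat \<Rightarrow> (int \<Rightarrow> int) \<Rightarrow> int set" where
  "DesA n \<pi> = {i \<in> {1..int n - 1}. lenL (n + 1) (\<pi> \<circ> agen i) \<le> lenL (n + 1) \<pi>}"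

definition desA :: "nat \<Rightarrow> (int \<Rightarrow> int) \<Rightarrow> nat" where
  "desA n \<pi> = card (DesA n \<pi>)"

end

theory Submission
  imports Defs
begin


lemma signset_iff: "x \<in> signset m \<longleftrightarrow> x \<noteq> 0 \<and> \<bar>x\<bar> \<le> int m"
  by (auto simp: signset_def)

lemma Bgrp_D:
  assumes "\<sigma> \<in> Bgrp m"
  shows "bij_betw \<sigma> (signset m) (signset m)" "\<And>i. \<sigma> (- i) = - \<sigma> i"
    "\<And>x. x \<notin> signset m \<Longrightarrow> \<sigma> x = x"
  using assms by (auto simp: Bgrp_def)

lemma Bgrp_in: "\<sigma> \<in> Bgrp m \<Longrightarrow> x \<in> signset m \<Longrightarrow> \<sigma> x \<in> signset m"
  using Bgrp_D(1) bij_betwE by blast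

lemma Bgrp_inj: assumes "\<sigma> \<in> Bgrp m" shows "inj \<sigma>"
proof (rule injI)
  fix x y assume e: "\<sigma> x = \<sigma> y"
  have ij: "inj_on \<sigma> (signset m)" using Bgrp_D(1)[OF assms] bij_betw_def by blast
  have xy: "x \<in> signset m \<longleftrightarrow> y \<in> signset m"
  proof
    assume x: "x \<in> signset m"
    show "y \<in> signset m"
    proof (rule ccontr)
      assume "y \<notin> signset m"
      hence "\<sigma> y = y" by (rule Bgrp_D(3)[OF assms])
      moreover have "\<sigma> x \<in> signset m" using x by (rule Bgrp_in[OF assms])
      ultimately show False using e \<open>y \<notin> signset m\<close> by simp
    qed
  next
    assume y: "y \<in> signset m"
    show "x \<in> signset m"
    proof (rule ccontr)
      assume "x \<notin> signset m"
      hence "\<sigma> x = x" by (rule Bgrp_D(3)[OF assms])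
      moreover have "\<sigma> y \<in> signset m" using y by (rule Bgrp_in[OF assms])
      ultimately show False using e \<open>x \<notin> signset m\<close> by simp
    qed
  qed
  show "x = y"
  proof (cases "x \<in> signset m")
    case True
    then have "y \<in> signset m" using xy by simp
    then show ?thesis using True ij e by (simp add: inj_on_eq_iff)
  next
    case False
    then have "y \<notin> signset m" using xy by simp
    then show ?thesis using False e Bgrp_D(3)[OF assms] by simp
  qed
qed

lemma Bgrp_surj: assumes "\<sigma> \<in> Bgrp m" shows "surj \<sigma>"
proof -
  { fix y
    have "y \<in> range \<sigma>"
    proof (cases "y \<in> signset m")
      case True
      then have "y \<in> \<sigma> ` signset m" using Bgrp_D(1)[OF assms] bij_betw_imp_surj_on by blast
      then show ?thesis by blast
    next
      case False
      then show ?thesis using Bgrp_D(3)[OF assms] by (metis rangeI)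
    qed }
  thus ?thesis by auto
qed

lemma Bgrp_bij: "\<sigma> \<in> Bgrp m \<Longrightarrow> bij \<sigma>"
  unfolding bij_def using Bgrp_inj Bgrp_surj by simp

lemma Bgrp_inv_comp: "\<sigma> \<in> Bgrp m \<Longrightarrow> inv \<sigma> \<circ> \<sigma> = id"
  by (rule inv_o_cancel[OF Bgrp_inj])

lemma Bgrp_comp_inv: "\<sigma> \<in> Bgrp m \<Longrightarrow> \<sigma> \<circ> inv \<sigma> = id"
  using Bgrp_surj[of \<sigma> m] surj_iff by auto

lemma Bgrp_inv_app: "\<sigma> \<in> Bgrp m \<Longrightarrow> inv \<sigma> (\<sigma> x) = x"
  by (rule inv_f_f[OF Bgrp_inj])

lemma Bgrp_app_inv: "\<sigma> \<in> Bgrp m \<Longrightarrow> \<sigma> (inv \<sigma> x) = x"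
  by (rule surj_f_inv_f[OF Bgrp_surj])

lemma Bgrp_comp: assumes "\<sigma> \<in> Bgrp m" "\<tau> \<in> Bgrp m" shows "\<sigma> \<circ> \<tau> \<in> Bgrp m"
proof -
  have "bij_betw (\<sigma> \<circ> \<tau>) (signset m) (signset m)"
    by (rule bij_betw_trans[OF Bgrp_D(1)[OF assms(2)] Bgrp_D(1)[OF assms(1)]])
  moreover have "(\<sigma> \<circ> \<tau>) (- i) = - (\<sigma> \<circ> \<tau>) i" for i
    by (simp add: Bgrp_D(2)[OF assms(1)] Bgrp_D(2)[OF assms(2)])
  moreover have "(\<sigma> \<circ> \<tau>) x = x" if "x \<notin> signset m" for x
    using that by (simp add: Bgrp_D(3)[OF assms(1)] Bgrp_D(3)[OF assms(2)])
  ultimately show ?thesis unfolding Bgrp_def by blast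
qed

lemma Bgrp_inv: assumes "\<sigma> \<in> Bgrp m" shows "inv \<sigma> \<in> Bgrp m"
proof -
  have img: "inv \<sigma> ` signset m = signset m"
  proof
    show "inv \<sigma> ` signset m \<subseteq> signset m"
    proof
      fix y assume "y \<in> inv \<sigma> ` signset m"
      then obtain x where x: "x \<in> signset m" "y = inv \<sigma> x" by blast
      show "y \<in> signset m"
      proof (rule ccontr)
        assume "y \<notin> signset m"
        then have "\<sigma> y = y" by (rule Bgrp_D(3)[OF assms])
        moreover have "\<sigma> y = x" using x(2) Bgrp_app_inv[OF assms] by simp
        ultimately show False using x(1) \<open>y \<notin> signset m\<close> by simp
      qed
    qed
    show "signset m \<subseteq> inv \<sigma> ` signset m"
    proof
      fix y assume y: "y \<in> signset m"
      have "\<sigma> y \<in> signset m" using y by (rule Bgrp_in[OF assms])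
      moreover have "y = inv \<sigma> (\<sigma> y)" using Bgrp_inv_app[OF assms] by simp
      ultimately show "y \<in> inv \<sigma> ` signset m" by blast
    qed
  qed
  have "inj (inv \<sigma>)" using Bgrp_bij[OF assms] by (simp add: bij_imp_bij_inv bij_is_inj)
  then have b: "bij_betw (inv \<sigma>) (signset m) (signset m)"
    using img unfolding bij_betw_def by (metis inj_on_subset subset_UNIV)
  have o: "inv \<sigma> (- i) = - inv \<sigma> i" for i
  proof -
    have "\<sigma> (- inv \<sigma> i) = - i" using Bgrp_D(2)[OF assms] Bgrp_app_inv[OF assms] by simp
    then have "inv \<sigma> (\<sigma> (- inv \<sigma> i)) = inv \<sigma> (- i)" by simp
    thus ?thesis using Bgrp_inv_app[OF assms] by simp
  qed
  have f: "inv \<sigma> x = x" if "x \<notin> signset m" for x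
  proof -
    have "\<sigma> x = x" using that by (rule Bgrp_D(3)[OF assms])
    then have "inv \<sigma> (\<sigma> x) = inv \<sigma> x" by simp
    thus ?thesis using Bgrp_inv_app[OF assms] by simp
  qed
  show ?thesis unfolding Bgrp_def using b o f by blast
qed

lemma Bgrp_invol: assumes "\<And>x. f (f x) = x" "\<And>x. x \<in> signset m \<Longrightarrow> f x \<in> signset m"
  "\<And>i. f (- i) = - f i" "\<And>x. x \<notin> signset m \<Longrightarrow> f x = x"
  shows "f \<in> Bgrp m"
proof -
  have "bij_betw f (signset m) (signset m)"
    by (rule bij_betw_byWitness[where f'=f]) (use assms in auto)
  thus ?thesis unfolding Bgrp_def using assms by auto
qed

lemma sgen_invol: "0 \<le> j \<Longrightarrow> sgen j (sgen j x) = x" for x by (simp add: sgen_def; arith)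
lemma sgen_odd: "0 \<le> j \<Longrightarrow> sgen j (- i) = - sgen j i" for i by (simp add: sgen_def; arith)
lemma sgen_in: assumes "0 \<le> j" "j \<le> int m - 1" "x \<in> signset m" shows "sgen j x \<in> signset m"
proof -
  have x: "x \<noteq> 0" "\<bar>x\<bar> \<le> int m" using assms(3) by (auto simp: signset_iff)
  show ?thesis
  proof (cases "j = 0")
    case True thus ?thesis using x by (simp add: sgen_def signset_iff)
  next
    case False
    then show ?thesis using x assms(1,2) unfolding signset_iff sgen_def by (simp; arith)
  qed
qed
lemma sgen_out: assumes "0 \<le> j" "j \<le> int m - 1" "x \<notin> signset m" shows "sgen j x = x"
proof -
  have "x = 0 \<or> \<bar>x\<bar> > int m" using assms(3) by (auto simp: signset_iff)
  thus ?thesis using assms(1,2) unfolding sgen_def by (simp; arith)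
qed

lemma sgen_Bgrp: assumes "0 \<le> j" "j \<le> int m - 1" shows "sgen j \<in> Bgrp m"
  by (rule Bgrp_invol[OF sgen_invol[OF assms(1)] sgen_in[OF assms] sgen_odd[OF assms(1)] sgen_out[OF assms]])

lemma sgen_sq: "0 \<le> j \<Longrightarrow> sgen j \<circ> sgen j = id"
  by (rule ext) (simp add: sgen_invol)



definition ind :: "bool \<Rightarrow> int" where "ind b = (if b then 1 else 0)"
definition II :: "nat \<Rightarrow> int set" where "II m = {1..int m}"

definition ninv :: "nat \<Rightarrow> (int \<Rightarrow> int) \<Rightarrow> int" where
  "ninv m \<pi> = (\<Sum>i\<in>II m. \<Sum>j\<in>II m. ind (i < j \<and> \<pi> j < \<pi> i))"
definition nn2 :: "nat \<Rightarrow> (int \<Rightarrow> int) \<Rightarrow> int" where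
  "nn2 m \<pi> = (\<Sum>i\<in>II m. \<Sum>j\<in>II m. ind (\<pi> i + \<pi> j < 0))"
definition nn1 :: "nat \<Rightarrow> (int \<Rightarrow> int) \<Rightarrow> int" where
  "nn1 m \<pi> = (\<Sum>i\<in>II m. ind (\<pi> i < 0))"
definition GG :: "nat \<Rightarrow> (int \<Rightarrow> int) \<Rightarrow> int" where
  "GG m \<pi> = 2 * ninv m \<pi> + nn2 m \<pi> + nn1 m \<pi>"

lemma finite_II[simp]: "finite (II m)" by (simp add: II_def)
lemma II_iff: "x \<in> II m \<longleftrightarrow> 1 \<le> x \<and> x \<le> int m" by (simp add: II_def)

lemma ind_nonneg: "0 \<le> ind b" by (simp add: ind_def)

lemma ninv_nonneg: "0 \<le> ninv m \<pi>"
  unfolding ninv_def by (intro sum_nonneg ind_nonneg)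
lemma nn2_nonneg: "0 \<le> nn2 m \<pi>"
  unfolding nn2_def by (intro sum_nonneg ind_nonneg)
lemma nn1_nonneg: "0 \<le> nn1 m \<pi>"
  unfolding nn1_def by (intro sum_nonneg ind_nonneg)
lemma GG_nonneg: "0 \<le> GG m \<pi>"
  unfolding GG_def using ninv_nonneg nn2_nonneg nn1_nonneg
  by (metis add_nonneg_nonneg mult_nonneg_nonneg zero_le_numeral)

lemma sum_one_point:
  assumes "finite I" "c \<in> I" "\<And>i. i \<in> I \<Longrightarrow> i \<noteq> c \<Longrightarrow> h i = 0"
  shows "sum h I = h c"
proof -
  have "sum h I = h c + sum h (I - {c})" by (rule sum.remove[OF assms(1,2)])
  moreover have "sum h (I - {c}) = 0" using assms(3) by (intro sum.neutral) auto
  ultimately show ?thesis by simp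
qed

lemma sum_two_point:
  assumes "finite I" "c \<in> I" "d \<in> I" "c \<noteq> d" "\<And>i. i \<in> I \<Longrightarrow> i \<noteq> c \<Longrightarrow> i \<noteq> d \<Longrightarrow> h i = 0"
  shows "sum h I = h c + h d"
proof -
  have "sum h I = h c + sum h (I - {c})" by (rule sum.remove[OF assms(1,2)])
  moreover have "sum h (I - {c}) = h d"
    by (rule sum_one_point) (use assms in auto)
  ultimately show ?thesis by simp
qed

lemma diff_one_point:
  fixes f g :: "'a \<Rightarrow> int"
  assumes "finite I" "c \<in> I" "\<And>i. i \<in> I \<Longrightarrow> i \<noteq> c \<Longrightarrow> f i = g i"
  shows "sum f I - sum g I = f c - g c"
proof -
  have "sum f I - sum g I = (\<Sum>i\<in>I. f i - g i)" by (simp add: sum_subtractf)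
  also have "\<dots> = f c - g c" by (rule sum_one_point) (use assms in auto)
  finally show ?thesis .
qed

lemma diff_double_one_point:
  fixes f g :: "'a \<Rightarrow> 'a \<Rightarrow> int"
  assumes "finite I" "c \<in> I" "\<And>i j. i \<in> I \<Longrightarrow> j \<in> I \<Longrightarrow> (i, j) \<noteq> (c, c) \<Longrightarrow> f i j = g i j"
  shows "(\<Sum>i\<in>I. \<Sum>j\<in>I. f i j) - (\<Sum>i\<in>I. \<Sum>j\<in>I. g i j) = f c c - g c c"
proof -
  have "(\<Sum>i\<in>I. \<Sum>j\<in>I. f i j) - (\<Sum>i\<in>I. \<Sum>j\<in>I. g i j)
      = (\<Sum>j\<in>I. f c j) - (\<Sum>j\<in>I. g c j)"
  proof (rule diff_one_point[OF assms(1,2)])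
    fix i assume "i \<in> I" "i \<noteq> c"
    then show "(\<Sum>j\<in>I. f i j) = (\<Sum>j\<in>I. g i j)" using assms(3) by (intro sum.cong) auto
  qed
  also have "\<dots> = f c c - g c c"
  proof (rule diff_one_point[OF assms(1,2)])
    fix j assume "j \<in> I" "j \<noteq> c"
    then show "f c j = g c j" using assms(2) by (intro assms(3)) auto
  qed
  finally show ?thesis .
qed

lemma diff_double_two_point:
  fixes f g :: "'a \<Rightarrow> 'a \<Rightarrow> int"
  assumes "finite I" "c \<in> I" "d \<in> I" "c \<noteq> d"
    "\<And>i j. i \<in> I \<Longrightarrow> j \<in> I \<Longrightarrow> (i, j) \<noteq> (c, d) \<Longrightarrow> (i, j) \<noteq> (d, c) \<Longrightarrow> f i j = g i j"
  shows "(\<Sum>i\<in>I. \<Sum>j\<in>I. f i j) - (\<Sum>i\<in>I. \<Sum>j\<in>I. g i j) = (f c d - g c d) + (f d c - g d c)"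
proof -
  have "(\<Sum>i\<in>I. \<Sum>j\<in>I. f i j) - (\<Sum>i\<in>I. \<Sum>j\<in>I. g i j)
      = (\<Sum>i\<in>I. (\<Sum>j\<in>I. f i j) - (\<Sum>j\<in>I. g i j))" by (simp add: sum_subtractf)
  also have "\<dots> = ((\<Sum>j\<in>I. f c j) - (\<Sum>j\<in>I. g c j)) + ((\<Sum>j\<in>I. f d j) - (\<Sum>j\<in>I. g d j))"
  proof (rule sum_two_point[OF assms(1-4)])
    fix i assume "i \<in> I" "i \<noteq> c" "i \<noteq> d"
    then have "(\<Sum>j\<in>I. f i j) = (\<Sum>j\<in>I. g i j)" using assms(5) by (intro sum.cong) auto
    then show "(\<Sum>j\<in>I. f i j) - (\<Sum>j\<in>I. g i j) = 0" by simp
  qed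
  also have "(\<Sum>j\<in>I. f c j) - (\<Sum>j\<in>I. g c j) = f c d - g c d"
  proof (rule diff_one_point[OF assms(1,3)])
    fix j assume "j \<in> I" "j \<noteq> d"
    then show "f c j = g c j" using assms(2,4) by (intro assms(5)) auto
  qed
  also have "(\<Sum>j\<in>I. f d j) - (\<Sum>j\<in>I. g d j) = f d c - g d c"
  proof (rule diff_one_point[OF assms(1,2)])
    fix j assume "j \<in> I" "j \<noteq> c"
    then show "f d j = g d j" using assms(3,4) by (intro assms(5)) auto
  qed
  finally show ?thesis .
qed

lemma sgen_pos: "1 \<le> k \<Longrightarrow> 0 < x \<Longrightarrow> sgen k x = (if x = k then k + 1 else if x = k + 1 then k else x)"
  by (simp add: sgen_def)

lemma sgen_II: assumes "1 \<le> k" "k + 1 \<le> int m" "x \<in> II m" shows "sgen k x \<in> II m"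
  using assms by (simp add: sgen_pos II_iff)

lemma sgen_bij_II: assumes "1 \<le> k" "k + 1 \<le> int m" shows "bij_betw (sgen k) (II m) (II m)"
  by (rule bij_betw_byWitness[where f'="sgen k"]) (use assms sgen_II sgen_invol in auto)

lemma double_reindex:
  assumes "bij_betw t I I"
  shows "(\<Sum>i\<in>I. \<Sum>j\<in>I. K (t i) (t j)) = (\<Sum>i\<in>I. \<Sum>j\<in>I. K i j)"
proof -
  have "(\<Sum>i\<in>I. \<Sum>j\<in>I. K (t i) (t j)) = (\<Sum>i\<in>I. \<Sum>j\<in>I. K (t i) j)"
    by (intro sum.cong refl sum.reindex_bij_betw[OF assms])
  also have "\<dots> = (\<Sum>i\<in>I. \<Sum>j\<in>I. K i j)"
    by (rule sum.reindex_bij_betw[OF assms, where g = "\<lambda>i. \<Sum>j\<in>I. K i j"])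
  finally show ?thesis .
qed

lemma single_reindex:
  assumes "bij_betw t I I"
  shows "(\<Sum>i\<in>I. K (t i)) = (\<Sum>i\<in>I. K i)"
  by (rule sum.reindex_bij_betw[OF assms])

lemma nn2_swap: assumes "1 \<le> k" "k + 1 \<le> int m" shows "nn2 m (\<pi> \<circ> sgen k) = nn2 m \<pi>"
  unfolding nn2_def comp_def
  by (rule double_reindex[OF sgen_bij_II[OF assms], where K = "\<lambda>a b. ind (\<pi> a + \<pi> b < 0)"])

lemma nn1_swap: assumes "1 \<le> k" "k + 1 \<le> int m" shows "nn1 m (\<pi> \<circ> sgen k) = nn1 m \<pi>"
  unfolding nn1_def comp_def
  by (rule single_reindex[OF sgen_bij_II[OF assms], where K = "\<lambda>a. ind (\<pi> a < 0)"])

lemma ninv_swap: assumes "1 \<le> k" "k + 1 \<le> int m"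
  shows "ninv m (\<pi> \<circ> sgen k) = ninv m \<pi> + ind (\<pi> k < \<pi> (k + 1)) - ind (\<pi> (k + 1) < \<pi> k)"
proof -
  let ?t = "sgen k"
  define K where "K a b = ind (?t a < ?t b \<and> \<pi> b < \<pi> a)" for a b
  have "ninv m (\<pi> \<circ> ?t) = (\<Sum>i\<in>II m. \<Sum>j\<in>II m. K (?t i) (?t j))"
    unfolding ninv_def K_def comp_def using assms by (simp add: sgen_invol)
  also have "\<dots> = (\<Sum>i\<in>II m. \<Sum>j\<in>II m. K i j)"
    by (rule double_reindex[OF sgen_bij_II[OF assms]])
  finally have e1: "ninv m (\<pi> \<circ> ?t) = (\<Sum>i\<in>II m. \<Sum>j\<in>II m. K i j)" .
  have kI: "k \<in> II m" "k + 1 \<in> II m" using assms by (auto simp: II_iff)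
  have "(\<Sum>i\<in>II m. \<Sum>j\<in>II m. K i j) - ninv m \<pi>
      = (K k (k+1) - ind (k < k + 1 \<and> \<pi> (k+1) < \<pi> k)) + (K (k+1) k - ind (k + 1 < k \<and> \<pi> k < \<pi> (k+1)))"
    unfolding ninv_def
  proof (rule diff_double_two_point[OF finite_II kI])
    show "k \<noteq> k + 1" by simp
    fix i j assume ij: "i \<in> II m" "j \<in> II m" "(i, j) \<noteq> (k, k + 1)" "(i, j) \<noteq> (k + 1, k)"
    have "(?t i < ?t j) = (i < j)" using ij assms by (auto simp: sgen_pos II_iff)
    then show "K i j = ind (i < j \<and> \<pi> j < \<pi> i)" by (simp add: K_def)
  qed
  moreover have "K k (k+1) = 0" "K (k+1) k = ind (\<pi> k < \<pi> (k+1))"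
    using assms by (simp_all add: K_def sgen_pos ind_def)
  ultimately show ?thesis using e1 by (simp add: ind_def)
qed

lemma GG_swap: assumes "1 \<le> k" "k + 1 \<le> int m"
  shows "GG m (\<pi> \<circ> sgen k) = GG m \<pi> + 2 * ind (\<pi> k < \<pi> (k + 1)) - 2 * ind (\<pi> (k + 1) < \<pi> k)"
  using ninv_swap[OF assms] nn2_swap[OF assms] nn1_swap[OF assms] by (simp add: GG_def)

definition HH :: "(int \<Rightarrow> int) \<Rightarrow> int \<Rightarrow> int \<Rightarrow> int" where
  "HH \<pi> i j = ind (i < j \<and> \<pi> j < \<pi> i) + ind (j < i \<and> \<pi> i < \<pi> j) + ind (\<pi> i + \<pi> j < 0)"

lemma GG_HH: "GG m \<pi> = (\<Sum>i\<in>II m. \<Sum>j\<in>II m. HH \<pi> i j) + nn1 m \<pi>"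
proof -
  have sw: "(\<Sum>i\<in>II m. \<Sum>j\<in>II m. ind (j < i \<and> \<pi> i < \<pi> j)) = ninv m \<pi>"
    unfolding ninv_def by (rule sum.swap)
  show ?thesis unfolding GG_def HH_def
    by (simp add: sum.distrib sw ninv_def nn2_def)
qed

lemma GG_s0:
  assumes "1 \<le> m" "\<pi>' 1 = - \<pi> 1" "\<And>i. i \<in> II m \<Longrightarrow> i \<noteq> 1 \<Longrightarrow> \<pi>' i = \<pi> i" "\<pi> 1 \<noteq> 0"
  shows "GG m \<pi>' = GG m \<pi> + (if \<pi> 1 > 0 then 2 else -2)"
proof -
  have oI: "1 \<in> II m" using assms(1) by (simp add: II_iff)
  have "(\<Sum>i\<in>II m. \<Sum>j\<in>II m. HH \<pi>' i j) - (\<Sum>i\<in>II m. \<Sum>j\<in>II m. HH \<pi> i j)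
      = HH \<pi>' 1 1 - HH \<pi> 1 1"
  proof (rule diff_double_one_point[OF finite_II oI])
    fix i j assume ij: "i \<in> II m" "j \<in> II m" "(i, j) \<noteq> (1, 1)"
    show "HH \<pi>' i j = HH \<pi> i j"
    proof (cases "i = 1")
      case True
      then have "j \<noteq> 1" "1 < j" using ij by (auto simp: II_iff)
      then show ?thesis using True assms(2,3) ij by (simp add: HH_def ind_def; arith)
    next
      case False
      then have ii: "\<pi>' i = \<pi> i" using assms(3) ij by simp
      show ?thesis
      proof (cases "j = 1")
        case True
        then show ?thesis using False ii assms(2) ij by (simp add: HH_def ind_def II_iff; arith)
      next
        case False
        then show ?thesis using ii assms(3) ij by (simp add: HH_def)
      qed
    qed
  qed
  moreover have "nn1 m \<pi>' - nn1 m \<pi> = ind (\<pi>' 1 < 0) - ind (\<pi> 1 < 0)"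
    unfolding nn1_def by (rule diff_one_point[OF finite_II oI]) (use assms(3) in auto)
  moreover have "HH \<pi>' 1 1 = ind (\<pi>' 1 + \<pi>' 1 < 0)" "HH \<pi> 1 1 = ind (\<pi> 1 + \<pi> 1 < 0)"
    by (simp_all add: HH_def ind_def)
  ultimately have "GG m \<pi>' - GG m \<pi> = ind (\<pi>' 1 + \<pi>' 1 < 0) - ind (\<pi> 1 + \<pi> 1 < 0)
      + (ind (\<pi>' 1 < 0) - ind (\<pi> 1 < 0))"
    unfolding GG_HH by simp
  then have d: "GG m \<pi>' - GG m \<pi> = ind (\<pi> 1 > 0) + ind (\<pi> 1 > 0) - ind (\<pi> 1 < 0) - ind (\<pi> 1 < 0)"
    using assms(2) by simp
  show ?thesis
  proof (cases "\<pi> 1 > 0")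
    case True
    then show ?thesis using d by (simp add: ind_def)
  next
    case False
    then have "\<pi> 1 < 0" using assms(4) by simp
    then show ?thesis using d False by (simp add: ind_def)
  qed
qed



lemma wordprod_Nil: "wordprod [] = id" by (simp add: wordprod_def)

lemma wordprod_snoc: "wordprod (w @ [j]) = wordprod w \<circ> sgen j"
  by (induction w) (simp_all add: wordprod_def o_assoc)

lemma id_Bgrp: "id \<in> Bgrp m"
  unfolding Bgrp_def by simp

lemma GG_id: "GG m id = 0"
proof -
  have "ninv m id = 0" unfolding ninv_def by (intro sum.neutral ballI) (simp add: ind_def)
  moreover have "nn2 m id = 0" unfolding nn2_def by (intro sum.neutral ballI) (simp add: ind_def II_iff)
  moreover have "nn1 m id = 0" unfolding nn1_def by (intro sum.neutral ballI) (simp add: ind_def II_iff)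
  ultimately show ?thesis by (simp add: GG_def)
qed

lemma one_signset: "1 \<le> m \<Longrightarrow> (1::int) \<in> signset m"
  by (simp add: signset_iff)

lemma II_signset: "x \<in> II m \<Longrightarrow> x \<in> signset m"
  by (simp add: signset_iff II_iff)

lemma GG_s0_B: assumes "\<pi> \<in> Bgrp m" "1 \<le> m"
  shows "GG m (\<pi> \<circ> sgen 0) = GG m \<pi> + (if \<pi> 1 > 0 then 2 else -2)"
proof (rule GG_s0[OF assms(2)])
  show "(\<pi> \<circ> sgen 0) 1 = - \<pi> 1" using Bgrp_D(2)[OF assms(1)] by (simp add: sgen_def)
  show "(\<pi> \<circ> sgen 0) i = \<pi> i" if "i \<in> II m" "i \<noteq> 1" for i
    using that by (simp add: sgen_def II_iff)
  have "\<pi> 1 \<in> signset m" using Bgrp_in[OF assms(1) one_signset[OF assms(2)]] .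
  then show "\<pi> 1 \<noteq> 0" by (simp add: signset_iff)
qed

lemma Bgrp_neq: assumes "\<pi> \<in> Bgrp m" "a \<noteq> b" shows "\<pi> a \<noteq> \<pi> b"
  using Bgrp_inj[OF assms(1)] assms(2) by (simp add: inj_eq)

lemma wp_B:
  assumes "set w \<subseteq> {0..int m - 1}"
  shows "wordprod w \<in> Bgrp m \<and> GG m (wordprod w) \<le> 2 * int (length w)"
  using assms
proof (induction w rule: rev_induct)
  case Nil
  have "wordprod [] \<in> Bgrp m" unfolding wordprod_Nil by (rule id_Bgrp)
  moreover have "GG m (wordprod []) = 0" unfolding wordprod_Nil by (rule GG_id)
  ultimately show ?case by simp
next
  case (snoc j w)
  then have IH: "wordprod w \<in> Bgrp m" "GG m (wordprod w) \<le> 2 * int (length w)" by auto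
  have j: "0 \<le> j" "j \<le> int m - 1" using snoc.prems by auto
  let ?p = "wordprod w"
  have B: "?p \<circ> sgen j \<in> Bgrp m" by (rule Bgrp_comp[OF IH(1) sgen_Bgrp[OF j]])
  have "GG m (?p \<circ> sgen j) \<le> GG m ?p + 2"
  proof (cases "j = 0")
    case True
    then have "1 \<le> m" using j by simp
    then show ?thesis using GG_s0_B[OF IH(1)] True by simp
  next
    case False
    then have "1 \<le> j" "j + 1 \<le> int m" using j by auto
    then show ?thesis using GG_swap[OF \<open>1 \<le> j\<close> \<open>j + 1 \<le> int m\<close>, of ?p] by (simp add: ind_def)
  qed
  then have g: "GG m (?p \<circ> sgen j) \<le> 2 * int (length (w @ [j]))" using IH(2) by simp
  show ?case unfolding wordprod_snoc using B g by (rule conjI)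
qed

lemma incr_id:
  assumes "\<pi> \<in> Bgrp m" "1 \<le> m" "\<pi> 1 > 0" "\<And>k. 1 \<le> k \<Longrightarrow> k + 1 \<le> int m \<Longrightarrow> \<pi> k < \<pi> (k + 1)"
  shows "\<pi> = id"
proof -
  have up: "1 \<le> t \<longrightarrow> t \<le> m \<longrightarrow> int t \<le> \<pi> (int t)" for t :: nat
  proof (induction t)
    case 0 then show ?case by simp
  next
    case (Suc t)
    show ?case
    proof (intro impI)
      assume sm: "Suc t \<le> m"
      show "int (Suc t) \<le> \<pi> (int (Suc t))"
      proof (cases "t = 0")
        case True then show ?thesis using assms(3) by simp
      next
        case False
        have e: "int (Suc t) = int t + 1" by simp
        have "int t \<le> \<pi> (int t)" using Suc.IH False sm by simp
        moreover have "\<pi> (int t) < \<pi> (int t + 1)" using sm assms(4)[of "int t"] False by simp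
        ultimately show ?thesis unfolding e by linarith
      qed
    qed
  qed
  have down: "d < m \<longrightarrow> \<pi> (int m - int d) \<le> int m - int d" for d :: nat
  proof (induction d)
    case 0
    have "int m \<in> signset m" using assms(2) by (simp add: signset_iff)
    then have "\<pi> (int m) \<in> signset m" by (rule Bgrp_in[OF assms(1)])
    then have "\<pi> (int m) \<le> int m" by (simp add: signset_iff abs_le_iff)
    then show ?case by simp
  next
    case (Suc d)
    show ?case
    proof
      assume "Suc d < m"
      then have "\<pi> (int m - int d) \<le> int m - int d" using Suc by simp
      moreover have "\<pi> (int m - int (Suc d)) < \<pi> (int m - int (Suc d) + 1)"
        using assms(4)[of "int m - int (Suc d)"] \<open>Suc d < m\<close> by simp
      ultimately show "\<pi> (int m - int (Suc d)) \<le> int m - int (Suc d)" by simp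
    qed
  qed
  have pos: "\<pi> x = x" if "x \<in> II m" for x
  proof -
    have x: "1 \<le> x" "x \<le> int m" using that by (auto simp: II_iff)
    define t where "t = nat x"
    have t: "x = int t" "1 \<le> t" "t \<le> m" using x unfolding t_def by auto
    have "int t \<le> \<pi> (int t)" using up[of t] t by simp
    moreover have "\<pi> (int m - int (m - t)) \<le> int m - int (m - t)" using down[of "m - t"] t by simp
    ultimately show ?thesis using t by simp
  qed
  show ?thesis
  proof
    fix x
    show "\<pi> x = id x"
    proof (cases "x \<in> signset m")
      case False then show ?thesis using Bgrp_D(3)[OF assms(1)] by simp
    next
      case True
      then have "x \<in> II m \<or> - x \<in> II m" by (auto simp: signset_iff II_iff)
      then show ?thesis
      proof
        assume "- x \<in> II m"
        then have "\<pi> (- x) = - x" by (rule pos)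
        then show ?thesis using Bgrp_D(2)[OF assms(1), of "-x"] by simp
      qed (simp add: pos)
    qed
  qed
qed

lemma wp_exists:
  assumes "\<pi> \<in> Bgrp m" "1 \<le> m"
  shows "\<exists>w. set w \<subseteq> {0..int m - 1} \<and> wordprod w = \<pi> \<and> 2 * int (length w) = GG m \<pi>"
  using assms(1)
proof (induction "nat (GG m \<pi>)" arbitrary: \<pi> rule: less_induct)
  case less
  have red: "\<exists>w. set w \<subseteq> {0..int m - 1} \<and> wordprod w = \<pi> \<and> 2 * int (length w) = GG m \<pi>"
    if j: "0 \<le> j" "j \<le> int m - 1" and g: "GG m (\<pi> \<circ> sgen j) = GG m \<pi> - 2" for j
  proof -
    have B: "\<pi> \<circ> sgen j \<in> Bgrp m" by (rule Bgrp_comp[OF less.prems sgen_Bgrp[OF j]])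
    have "nat (GG m (\<pi> \<circ> sgen j)) < nat (GG m \<pi>)" using g GG_nonneg[of m "\<pi> \<circ> sgen j"] by simp
    then obtain w where w: "set w \<subseteq> {0..int m - 1}" "wordprod w = \<pi> \<circ> sgen j"
      "2 * int (length w) = GG m (\<pi> \<circ> sgen j)" using less.hyps B by blast
    have "wordprod (w @ [j]) = \<pi> \<circ> sgen j \<circ> sgen j" by (simp add: wordprod_snoc w(2))
    also have "\<dots> = \<pi>" by (simp add: comp_assoc sgen_sq[OF j(1)])
    finally have "wordprod (w @ [j]) = \<pi>" .
    moreover have "set (w @ [j]) \<subseteq> {0..int m - 1}" using w(1) j by auto
    moreover have "2 * int (length (w @ [j])) = GG m \<pi>" using w(3) g by simp
    ultimately show ?thesis by blast
  qed
  have p1: "\<pi> 1 \<in> signset m" using Bgrp_in[OF less.prems one_signset[OF assms(2)]] .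
  show ?case
  proof (cases "\<pi> 1 < 0")
    case True
    then show ?thesis using red[of 0] GG_s0_B[OF less.prems assms(2)] assms(2) by simp
  next
    case False
    then have pp: "\<pi> 1 > 0" using p1 by (simp add: signset_iff)
    show ?thesis
    proof (cases "\<exists>k. 1 \<le> k \<and> k + 1 \<le> int m \<and> \<pi> (k + 1) < \<pi> k")
      case True
      then obtain k where k: "1 \<le> k" "k + 1 \<le> int m" "\<pi> (k + 1) < \<pi> k" by blast
      have "GG m (\<pi> \<circ> sgen k) = GG m \<pi> - 2"
        using GG_swap[OF k(1,2), of \<pi>] k(3) by (simp add: ind_def)
      then show ?thesis using red[of k] k by simp
    next
      case False
      have "\<pi> k < \<pi> (k + 1)" if "1 \<le> k" "k + 1 \<le> int m" for k
        using False that Bgrp_neq[OF less.prems, of k "k+1"] by force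
      then have "\<pi> = id" using incr_id[OF less.prems assms(2) pp] by blast
      then show ?thesis by (intro exI[of _ "[]"]) (simp add: wordprod_Nil GG_id)
    qed
  qed
qed

lemma lenB_GG:
  assumes "\<pi> \<in> Bgrp m" "1 \<le> m"
  shows "2 * int (lenB m \<pi>) = GG m \<pi>"
proof -
  obtain w0 where w0: "set w0 \<subseteq> {0..int m - 1}" "wordprod w0 = \<pi>" "2 * int (length w0) = GG m \<pi>"
    using wp_exists[OF assms] by blast
  have "lenB m \<pi> = length w0"
    unfolding lenB_def
  proof (rule Least_equality)
    show "\<exists>w. length w = length w0 \<and> set w \<subseteq> {0..int m - 1} \<and> wordprod w = \<pi>"
      using w0 by blast
    fix k assume "\<exists>w. length w = k \<and> set w \<subseteq> {0..int m - 1} \<and> wordprod w = \<pi>"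
    then obtain w where w: "length w = k" "set w \<subseteq> {0..int m - 1}" "wordprod w = \<pi>" by blast
    have "GG m \<pi> \<le> 2 * int k" using wp_B[OF w(2)] w(1,3) by simp
    then show "length w0 \<le> k" using w0(3) by simp
  qed
  then show ?thesis using w0(3) by simp
qed

lemma lenB_swap:
  assumes "\<pi> \<in> Bgrp m" "1 \<le> k" "k + 1 \<le> int m"
  shows "int (lenB m (\<pi> \<circ> sgen k)) = int (lenB m \<pi>) + ind (\<pi> k < \<pi> (k + 1)) - ind (\<pi> (k + 1) < \<pi> k)"
proof -
  have m: "1 \<le> m" using assms(2,3) by simp
  have B: "\<pi> \<circ> sgen k \<in> Bgrp m" using Bgrp_comp[OF assms(1) sgen_Bgrp] assms(2,3) by simp
  show ?thesis using lenB_GG[OF B m] lenB_GG[OF assms(1) m] GG_swap[OF assms(2,3), of \<pi>] by simp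
qed



definition lrm :: "(int \<Rightarrow> int) \<Rightarrow> int \<Rightarrow> bool" where
  "lrm \<sigma> j = (\<forall>i \<in> {1..<j}. \<sigma> i > \<sigma> j)"

definition dsum :: "nat \<Rightarrow> (int \<Rightarrow> int) \<Rightarrow> int" where
  "dsum m \<sigma> = (\<Sum>j\<in>{2..int m}. ind (lrm \<sigma> j))"

lemma card_filter_ind: "finite A \<Longrightarrow> int (card {x \<in> A. P x}) = (\<Sum>x\<in>A. ind (P x))"
proof -
  assume f: "finite A"
  have "(\<Sum>x\<in>A. ind (P x)) = (\<Sum>x\<in>{x \<in> A. P x}. 1)"
    using sum.inter_filter[OF f, of "\<lambda>_. (1::int)" P] by (simp add: ind_def)
  then show ?thesis by simp
qed

lemma delB_dsum: "int (delB m \<sigma>) = dsum m \<sigma>"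
  unfolding delB_def dsum_def lrm_def by (rule card_filter_ind) simp

lemma forall_bij: "bij_betw t S S \<Longrightarrow> (\<forall>l\<in>S. P (t l)) \<longleftrightarrow> (\<forall>l\<in>S. P l)"
  by (metis bij_betw_def imageE imageI)

lemma sgen_bij_prefix:
  assumes "1 \<le> k" "2 \<le> j" "j \<noteq> k + 1"
  shows "bij_betw (sgen k) {1..<j} {1..<j}"
proof (rule bij_betw_byWitness[where f'="sgen k"])
  show "\<forall>a\<in>{1..<j}. sgen k (sgen k a) = a" "\<forall>a\<in>{1..<j}. sgen k (sgen k a) = a"
    using assms sgen_invol by auto
  show "sgen k ` {1..<j} \<subseteq> {1..<j}" "sgen k ` {1..<j} \<subseteq> {1..<j}"
    using assms by (auto simp: sgen_pos)
qed

lemma lrm_swap_other: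
  assumes "1 \<le> k" "2 \<le> j" "j \<noteq> k" "j \<noteq> k + 1"
  shows "lrm (\<sigma> \<circ> sgen k) j = lrm \<sigma> j"
proof -
  have e: "sgen k j = j" using assms by (simp add: sgen_pos)
  have "lrm (\<sigma> \<circ> sgen k) j = (\<forall>l\<in>{1..<j}. \<sigma> (sgen k l) > \<sigma> j)"
    unfolding lrm_def using e by simp
  also have "\<dots> = (\<forall>l\<in>{1..<j}. \<sigma> l > \<sigma> j)"
    by (rule forall_bij[OF sgen_bij_prefix[OF assms(1,2,4)], where P = "\<lambda>l. \<sigma> l > \<sigma> j"])
  finally show ?thesis unfolding lrm_def .
qed

lemma dsum_swap1:
  assumes "2 \<le> m"
  shows "dsum m (\<sigma> \<circ> sgen 1) - dsum m \<sigma> = ind (lrm (\<sigma> \<circ> sgen 1) 2) - ind (lrm \<sigma> 2)"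
  unfolding dsum_def
  by (rule diff_one_point) (use assms lrm_swap_other[of 1] in auto)

lemma dsum_swapk:
  assumes "2 \<le> k" "k + 1 \<le> int m"
  shows "dsum m (\<sigma> \<circ> sgen k) - dsum m \<sigma> = (ind (lrm (\<sigma> \<circ> sgen k) k) - ind (lrm \<sigma> k))
     + (ind (lrm (\<sigma> \<circ> sgen k) (k + 1)) - ind (lrm \<sigma> (k + 1)))"
proof -
  have "dsum m (\<sigma> \<circ> sgen k) - dsum m \<sigma> = (\<Sum>j\<in>{2..int m}. ind (lrm (\<sigma> \<circ> sgen k) j) - ind (lrm \<sigma> j))"
    unfolding dsum_def by (simp add: sum_subtractf)
  also have "\<dots> = (ind (lrm (\<sigma> \<circ> sgen k) k) - ind (lrm \<sigma> k))
     + (ind (lrm (\<sigma> \<circ> sgen k) (k + 1)) - ind (lrm \<sigma> (k + 1)))"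
    by (rule sum_two_point) (use assms lrm_swap_other[of k] in auto)
  finally show ?thesis .
qed

lemma lrm2: "lrm \<sigma> 2 = (\<sigma> 2 < \<sigma> 1)"
proof -
  have "{1..<2::int} = {1}" by auto
  then show ?thesis unfolding lrm_def by simp
qed

lemma lrm2_s1: "lrm (\<sigma> \<circ> sgen 1) 2 = (\<sigma> 1 < \<sigma> 2)"
  unfolding lrm2 by (simp add: sgen_def)

definition QQ :: "(int \<Rightarrow> int) \<Rightarrow> int \<Rightarrow> int \<Rightarrow> bool" where
  "QQ \<sigma> k z = (\<forall>l\<in>{1..<k}. z < \<sigma> l)"

lemma lrm_k: "lrm \<sigma> k = QQ \<sigma> k (\<sigma> k)"
  by (auto simp: lrm_def QQ_def)

lemma lrm_k1: assumes "1 \<le> k" shows "lrm \<sigma> (k + 1) = (QQ \<sigma> k (\<sigma> (k + 1)) \<and> \<sigma> (k + 1) < \<sigma> k)"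
proof -
  have "{1..<k+1} = insert k {1..<k}" using assms by auto
  then show ?thesis unfolding lrm_def QQ_def by auto
qed

lemma QQ_swap: assumes "1 \<le> k" shows "QQ (\<sigma> \<circ> sgen k) k z = QQ \<sigma> k z"
  unfolding QQ_def using assms by (simp add: sgen_pos)

lemma lrm_s_k: assumes "1 \<le> k" shows "lrm (\<sigma> \<circ> sgen k) k = QQ \<sigma> k (\<sigma> (k + 1))"
  unfolding lrm_k QQ_swap[OF assms] using assms by (simp add: sgen_pos)

lemma lrm_s_k1: assumes "1 \<le> k"
  shows "lrm (\<sigma> \<circ> sgen k) (k + 1) = (QQ \<sigma> k (\<sigma> k) \<and> \<sigma> k < \<sigma> (k + 1))"
  unfolding lrm_k1[OF assms] QQ_swap[OF assms] using assms by (simp add: sgen_pos)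

lemma agen_comp: "\<pi> \<circ> agen i = (\<pi> \<circ> sgen 1) \<circ> sgen (i + 1)"
  by (simp add: agen_def comp_assoc)

lemma lenL_diff:
  assumes B: "\<pi> \<in> Bgrp m" and i: "1 \<le> i" "i + 2 \<le> int m"
  defines "\<sigma> \<equiv> \<pi> \<circ> sgen 1"
  shows "lenL m (\<pi> \<circ> agen i) - lenL m \<pi> =
     ind (\<sigma> (i+1) < \<sigma> (i+2)) - ind (\<sigma> (i+2) < \<sigma> (i+1))
     - (ind (QQ \<sigma> (i+1) (\<sigma> (i+2))) + ind (QQ \<sigma> (i+1) (\<sigma> (i+1)) \<and> \<sigma> (i+1) < \<sigma> (i+2))
        - ind (QQ \<sigma> (i+1) (\<sigma> (i+1))) - ind (QQ \<sigma> (i+1) (\<sigma> (i+2)) \<and> \<sigma> (i+2) < \<sigma> (i+1)))"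
proof -
  have m2: "2 \<le> m" using i by simp
  have Bs: "\<sigma> \<in> Bgrp m" unfolding \<sigma>_def using Bgrp_comp[OF B sgen_Bgrp[of 1 m]] m2 by simp
  have c: "\<pi> \<circ> agen i = \<sigma> \<circ> sgen (i + 1)" unfolding \<sigma>_def by (rule agen_comp)
  have L1: "int (lenB m \<sigma>) = int (lenB m \<pi>) + ind (\<pi> 1 < \<pi> 2) - ind (\<pi> 2 < \<pi> 1)"
    unfolding \<sigma>_def using lenB_swap[OF B, of 1] m2 by simp
  have L2: "int (lenB m (\<sigma> \<circ> sgen (i+1))) = int (lenB m \<sigma>) + ind (\<sigma> (i+1) < \<sigma> (i+1+1)) - ind (\<sigma> (i+1+1) < \<sigma> (i+1))"
    using lenB_swap[OF Bs, of "i+1"] i by simp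
  have D1: "dsum m \<sigma> - dsum m \<pi> = ind (\<pi> 1 < \<pi> 2) - ind (\<pi> 2 < \<pi> 1)"
    unfolding \<sigma>_def using dsum_swap1[OF m2, of \<pi>] by (simp add: lrm2 sgen_def)
  have i1: "1 \<le> i + 1" using i by simp
  have D2: "dsum m (\<sigma> \<circ> sgen (i+1)) - dsum m \<sigma> =
     (ind (QQ \<sigma> (i+1) (\<sigma> (i+1+1))) - ind (QQ \<sigma> (i+1) (\<sigma> (i+1))))
     + (ind (QQ \<sigma> (i+1) (\<sigma> (i+1)) \<and> \<sigma> (i+1) < \<sigma> (i+1+1)) - ind (QQ \<sigma> (i+1) (\<sigma> (i+1+1)) \<and> \<sigma> (i+1+1) < \<sigma> (i+1)))"
  proof -
    have a1: "lrm (\<sigma> \<circ> sgen (i+1)) (i+1) = QQ \<sigma> (i+1) (\<sigma> (i+1+1))" by (rule lrm_s_k[OF i1])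
    have a2: "lrm (\<sigma> \<circ> sgen (i+1)) (i+1+1) = (QQ \<sigma> (i+1) (\<sigma> (i+1)) \<and> \<sigma> (i+1) < \<sigma> (i+1+1))"
      by (rule lrm_s_k1[OF i1])
    have a3: "lrm \<sigma> (i+1) = QQ \<sigma> (i+1) (\<sigma> (i+1))" by (rule lrm_k)
    have a4: "lrm \<sigma> (i+1+1) = (QQ \<sigma> (i+1) (\<sigma> (i+1+1)) \<and> \<sigma> (i+1+1) < \<sigma> (i+1))" by (rule lrm_k1[OF i1])
    have "2 \<le> i + 1" "i + 1 + 1 \<le> int m" using i by auto
    from dsum_swapk[OF this, of \<sigma>] show ?thesis unfolding a1 a2 a3 a4 by simp
  qed
  have e: "i + 1 + 1 = i + 2" by simp
  show ?thesis unfolding lenL_def c using L1 L2 D1 D2 delB_dsum[of m \<sigma>] delB_dsum[of m \<pi>]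
      delB_dsum[of m "\<sigma> \<circ> sgen (i+1)"] unfolding e by simp
qed



definition condS :: "int \<Rightarrow> (int \<Rightarrow> int) \<Rightarrow> bool" where
  "condS i \<pi> = ((\<pi> \<circ> sgen 1) (i+1) < (\<pi> \<circ> sgen 1) (i+2)
      \<and> (\<exists>l\<in>{1..i}. (\<pi> \<circ> sgen 1) l < (\<pi> \<circ> sgen 1) (i+2)))"

lemma DesA_iff:
  assumes B: "\<pi> \<in> Bgrp (n + 1)" and i: "1 \<le> i" "i \<le> int n - 1"
  shows "i \<in> DesA n \<pi> \<longleftrightarrow> \<not> condS i \<pi>"
proof -
  define \<sigma> where "\<sigma> = \<pi> \<circ> sgen 1"
  have i2: "i + 2 \<le> int (n + 1)" using i by simp
  have Bs: "\<sigma> \<in> Bgrp (n + 1)" unfolding \<sigma>_def using Bgrp_comp[OF B sgen_Bgrp[of 1 "n+1"]] i by simp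
  define x where "x = \<sigma> (i+1)"
  define y where "y = \<sigma> (i+2)"
  define Q where "Q z = QQ \<sigma> (i+1) z" for z
  have D: "lenL (n+1) (\<pi> \<circ> agen i) - lenL (n+1) \<pi> =
     ind (x < y) - ind (y < x) - (ind (Q y) + ind (Q x \<and> x < y) - ind (Q x) - ind (Q y \<and> y < x))"
    using lenL_diff[OF B i(1) i2] unfolding x_def y_def Q_def \<sigma>_def by simp
  have xy: "x \<noteq> y" unfolding x_def y_def using Bgrp_neq[OF Bs, of "i+1" "i+2"] by simp
  have mem: "i \<in> DesA n \<pi> \<longleftrightarrow> lenL (n+1) (\<pi> \<circ> agen i) - lenL (n+1) \<pi> \<le> 0"
    using i unfolding DesA_def by auto
  have nQ: "\<not> Q y \<longleftrightarrow> (\<exists>l\<in>{1..i}. \<sigma> l < y)"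
  proof
    assume "\<not> Q y"
    then obtain l where l: "l \<in> {1..<i+1}" "\<not> y < \<sigma> l" unfolding Q_def QQ_def by blast
    have "\<sigma> l \<noteq> y" unfolding y_def using Bgrp_neq[OF Bs, of l "i+2"] l(1) by auto
    then show "\<exists>l\<in>{1..i}. \<sigma> l < y" using l by (intro bexI[of _ l]) auto
  next
    assume "\<exists>l\<in>{1..i}. \<sigma> l < y"
    then obtain l where l: "l \<in> {1..i}" "\<sigma> l < y" by blast
    show "\<not> Q y" unfolding Q_def QQ_def
    proof
      assume "\<forall>l\<in>{1..<i+1}. y < \<sigma> l"
      moreover have "l \<in> {1..<i+1}" using l(1) by auto
      ultimately have "y < \<sigma> l" by blast
      then show False using l(2) by simp
    qed
  qed
  have cs: "condS i \<pi> \<longleftrightarrow> x < y \<and> (\<exists>l\<in>{1..i}. \<sigma> l < y)"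
    unfolding condS_def x_def y_def \<sigma>_def by simp
  show ?thesis
  proof (cases "x < y")
    case True
    then have "lenL (n+1) (\<pi> \<circ> agen i) - lenL (n+1) \<pi> = 1 - ind (Q y)" using D by (simp add: ind_def)
    then have "i \<in> DesA n \<pi> \<longleftrightarrow> Q y" using mem by (simp add: ind_def)
    then show ?thesis using cs nQ True by blast
  next
    case False
    then have "y < x" using xy by simp
    then have "lenL (n+1) (\<pi> \<circ> agen i) - lenL (n+1) \<pi> = ind (Q x) - 1" using D False by (simp add: ind_def)
    then show ?thesis using mem cs False by (simp add: ind_def)
  qed
qed

lemma desA_zero_iff:
  assumes B: "\<pi> \<in> Bgrp (n + 1)"
  shows "desA n \<pi> = 0 \<longleftrightarrow> (\<forall>i. 1 \<le> i \<longrightarrow> i \<le> int n - 1 \<longrightarrow> condS i \<pi>)"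
proof -
  have fin: "finite (DesA n \<pi>)" unfolding DesA_def
    by (rule finite_subset[where B="{1..int n - 1}"]) auto
  have "desA n \<pi> = 0 \<longleftrightarrow> DesA n \<pi> = {}" unfolding desA_def using fin by simp
  also have "\<dots> \<longleftrightarrow> (\<forall>i. 1 \<le> i \<longrightarrow> i \<le> int n - 1 \<longrightarrow> i \<notin> DesA n \<pi>)"
    unfolding DesA_def by auto
  also have "\<dots> \<longleftrightarrow> (\<forall>i. 1 \<le> i \<longrightarrow> i \<le> int n - 1 \<longrightarrow> condS i \<pi>)"
    using DesA_iff[OF B] by blast
  finally show ?thesis .
qed

lemma chain_lt:
  fixes f :: "int \<Rightarrow> int" and a b p q :: int
  assumes "\<And>k. a \<le> k \<Longrightarrow> k + 1 \<le> b \<Longrightarrow> f k < (f (k + 1) :: int)"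
  shows "a \<le> p \<Longrightarrow> p < q \<Longrightarrow> q \<le> b \<Longrightarrow> f p < f q"
proof -
  have "\<forall>q. a \<le> p \<longrightarrow> q = p + int d + 1 \<longrightarrow> q \<le> b \<longrightarrow> f p < f q" for d :: nat
  proof (induction d)
    case 0 then show ?case using assms by auto
  next
    case (Suc d)
    show ?case
    proof (intro allI impI)
      fix q assume h: "a \<le> p" "q = p + int (Suc d) + 1" "q \<le> b"
      have e: "q - 1 = p + int d + 1" using h(2) by simp
      have le: "q - 1 \<le> b" using h(3) by simp
      have "f p < f (q - 1)" using Suc.IH h(1) e le by blast
      moreover have "f (q - 1) < f q" using assms[of "q - 1"] h by simp
      ultimately show "f p < f q" by simp
    qed
  qed
  moreover assume "a \<le> p" "p < q" "q \<le> b"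
  moreover have "q = p + int (nat (q - p - 1)) + 1" using \<open>p < q\<close> by simp
  ultimately show "f p < f q" by blast
qed

definition Tcond :: "nat \<Rightarrow> (int \<Rightarrow> int) \<Rightarrow> bool" where
  "Tcond m \<pi> = ((\<forall>k. 2 \<le> k \<longrightarrow> k + 1 \<le> int m \<longrightarrow> \<pi> k < \<pi> (k + 1)) \<and> (3 \<le> int m \<longrightarrow> \<pi> 1 < \<pi> 3))"

lemma condS_Tcond:
  "(\<forall>i. 1 \<le> i \<longrightarrow> i \<le> int n - 1 \<longrightarrow> condS i \<pi>) \<longleftrightarrow> Tcond (n + 1) \<pi>"
proof
  assume H: "\<forall>i. 1 \<le> i \<longrightarrow> i \<le> int n - 1 \<longrightarrow> condS i \<pi>"
  have a: "\<pi> k < \<pi> (k + 1)" if "2 \<le> k" "k + 1 \<le> int (n + 1)" for k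
  proof (cases "k = 2")
    case True
    then have "condS 1 \<pi>" using H that by simp
    then show ?thesis using True by (simp add: condS_def sgen_def)
  next
    case False
    then have "condS (k - 1) \<pi>" using H that by simp
    then have c: "(\<pi> \<circ> sgen 1) (k - 1 + 1) < (\<pi> \<circ> sgen 1) (k - 1 + 2)" unfolding condS_def by blast
    have e1: "k - 1 + 1 = k" "k - 1 + 2 = k + 1" by simp_all
    have e2: "sgen 1 k = k" "sgen 1 (k+1) = k+1" using that False by (simp_all add: sgen_def)
    show ?thesis using c unfolding e1 by (simp add: e2)
  qed
  have b: "\<pi> 1 < \<pi> 3" if "3 \<le> int (n + 1)"
  proof -
    have "condS 1 \<pi>" using H that by simp
    then show ?thesis by (simp add: condS_def sgen_def)
  qed
  show "Tcond (n + 1) \<pi>" unfolding Tcond_def using a b by blast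
next
  assume T: "Tcond (n + 1) \<pi>"
  have inc: "\<And>k. 2 \<le> k \<Longrightarrow> k + 1 \<le> int (n+1) \<Longrightarrow> \<pi> k < \<pi> (k + 1)" using T unfolding Tcond_def by blast
  show "\<forall>i. 1 \<le> i \<longrightarrow> i \<le> int n - 1 \<longrightarrow> condS i \<pi>"
  proof (intro allI impI)
    fix i :: int assume i: "1 \<le> i" "i \<le> int n - 1"
    show "condS i \<pi>"
    proof (cases "i = 1")
      case True
      have "\<pi> 1 < \<pi> 3" using T i unfolding Tcond_def by simp
      moreover have "\<pi> 2 < \<pi> 3" using inc[of 2] i by simp
      ultimately show ?thesis using True by (simp add: condS_def sgen_def)
    next
      case False
      have "\<pi> (i + 1) < \<pi> (i + 2)" using inc[of "i+1"] i False by (simp add: add.assoc)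
      moreover have "\<pi> 2 < \<pi> (i + 2)"
        by (rule chain_lt[where a=2 and b="int (n+1)" and f=\<pi>]) (use inc i False in auto)
      ultimately show ?thesis using False i unfolding condS_def
        by (intro conjI bexI[of _ 1]) (auto simp: sgen_def)
    qed
  qed
qed



lemma signset_cases: "x \<in> signset m \<Longrightarrow> x \<in> II m \<or> - x \<in> II m"
  by (auto simp: signset_iff II_iff)

lemma Sgrp_B: "u \<in> Sgrp m \<Longrightarrow> u \<in> Bgrp m" by (simp add: Sgrp_def)

lemma Sgrp_pos: "u \<in> Sgrp m \<Longrightarrow> x \<in> II m \<Longrightarrow> u x > 0" by (simp add: Sgrp_def II_def)

lemma Sgrp_sign:
  assumes u: "u \<in> Sgrp m"
  shows "u x < 0 \<longleftrightarrow> x < 0" "u x > 0 \<longleftrightarrow> x > 0"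
proof -
  have B: "u \<in> Bgrp m" using u by (rule Sgrp_B)
  have "(u x < 0 \<longleftrightarrow> x < 0) \<and> (u x > 0 \<longleftrightarrow> x > 0)"
  proof (cases "x \<in> signset m")
    case False then show ?thesis using Bgrp_D(3)[OF B] by simp
  next
    case True
    then have "x \<in> II m \<or> - x \<in> II m" by (rule signset_cases)
    then show ?thesis
    proof
      assume xi: "x \<in> II m"
      then have "u x > 0" by (rule Sgrp_pos[OF u])
      then show ?thesis using xi by (auto simp: II_iff)
    next
      assume h: "- x \<in> II m"
      then have "u (- x) > 0" using Sgrp_pos[OF u] by simp
      then have "u x < 0" using Bgrp_D(2)[OF B, of x] by simp
      then show ?thesis using h by (auto simp: II_iff)
    qed
  qed
  then show "u x < 0 \<longleftrightarrow> x < 0" "u x > 0 \<longleftrightarrow> x > 0" by auto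
qed

lemma Sgrp_I: assumes "u \<in> Bgrp m" "\<And>x. x \<in> II m \<Longrightarrow> u x > 0" shows "u \<in> Sgrp m"
  using assms by (simp add: Sgrp_def II_def)

lemma Sgrp_comp: assumes "u \<in> Sgrp m" "v \<in> Sgrp m" shows "u \<circ> v \<in> Sgrp m"
proof (rule Sgrp_I)
  show "u \<circ> v \<in> Bgrp m" using Bgrp_comp[OF Sgrp_B[OF assms(1)] Sgrp_B[OF assms(2)]] .
  fix x assume "x \<in> II m"
  then have "v x > 0" using Sgrp_pos[OF assms(2)] by simp
  then show "(u \<circ> v) x > 0" using Sgrp_sign(2)[OF assms(1)] by simp
qed

lemma sgen_Sgrp: assumes "1 \<le> k" "k + 1 \<le> int m" shows "sgen k \<in> Sgrp m"
proof (rule Sgrp_I)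
  show "sgen k \<in> Bgrp m" using sgen_Bgrp[of k m] assms by simp
  fix x assume "x \<in> II m"
  then show "sgen k x > 0" using assms by (simp add: sgen_pos II_iff)
qed

lemma inv_sign:
  assumes u: "u \<in> Sgrp m" shows "inv u x < 0 \<longleftrightarrow> x < 0"
proof -
  have "u (inv u x) = x" using Bgrp_app_inv[OF Sgrp_B[OF u]] .
  then show ?thesis using Sgrp_sign(1)[OF u, of "inv u x"] by simp
qed

lemma Neg_inv_comp:
  assumes s: "\<sigma> \<in> Bgrp m" and u: "u \<in> Sgrp m"
  shows "Neg m (inv (\<sigma> \<circ> u)) = Neg m (inv \<sigma>)"
proof -
  have "inv (\<sigma> \<circ> u) = inv u \<circ> inv \<sigma>"
    by (rule o_inv_distrib[OF Bgrp_bij[OF s] Bgrp_bij[OF Sgrp_B[OF u]]])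
  then show ?thesis unfolding Neg_def using inv_sign[OF u] by simp
qed

lemma same_Neg_Sgrp:
  assumes s: "\<sigma> \<in> Bgrp m" and s': "\<sigma>' \<in> Bgrp m" and N: "Neg m (inv \<sigma>) = Neg m (inv \<sigma>')"
  shows "inv \<sigma> \<circ> \<sigma>' \<in> Sgrp m"
proof (rule Sgrp_I)
  show "inv \<sigma> \<circ> \<sigma>' \<in> Bgrp m" by (rule Bgrp_comp[OF Bgrp_inv[OF s] s'])
  fix i assume i: "i \<in> II m"
  define y where "y = \<sigma>' i"
  have ys: "y \<in> signset m" unfolding y_def by (rule Bgrp_in[OF s' II_signset[OF i]])
  have iy: "inv \<sigma>' y = i" unfolding y_def by (rule Bgrp_inv_app[OF s'])
  have iys: "inv \<sigma> y \<in> signset m" using Bgrp_in[OF Bgrp_inv[OF s] ys] .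
  have "inv \<sigma> y > 0"
  proof (cases "y > 0")
    case True
    then have "y \<in> II m" using ys by (auto simp: signset_iff II_iff)
    moreover have "y \<notin> Neg m (inv \<sigma>')" using iy i by (auto simp: Neg_def II_iff)
    ultimately have "y \<notin> Neg m (inv \<sigma>)" using N by simp
    then have "\<not> inv \<sigma> y < 0" using \<open>y \<in> II m\<close> by (auto simp: Neg_def II_iff)
    then show ?thesis using iys by (auto simp: signset_iff)
  next
    case False
    then have "y < 0" using ys by (auto simp: signset_iff)
    then have my: "- y \<in> II m" using ys by (auto simp: signset_iff II_iff)
    have "inv \<sigma>' (- y) = - i" using iy Bgrp_D(2)[OF Bgrp_inv[OF s']] by simp
    then have "- y \<in> Neg m (inv \<sigma>')" using my i by (auto simp: Neg_def II_iff)
    then have "- y \<in> Neg m (inv \<sigma>)" using N by simp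
    then have "inv \<sigma> (- y) < 0" by (simp add: Neg_def)
    then show ?thesis using Bgrp_D(2)[OF Bgrp_inv[OF s], of y] by simp
  qed
  then show "(inv \<sigma> \<circ> \<sigma>') i > 0" unfolding y_def by simp
qed

definition diag :: "int set \<Rightarrow> int \<Rightarrow> int" where
  "diag B x = (if \<bar>x\<bar> \<in> B then - x else x)"

lemma diag_Bgrp: assumes "B \<subseteq> II m" shows "diag B \<in> Bgrp m"
proof (rule Bgrp_invol)
  show "diag B (diag B x) = x" for x by (simp add: diag_def)
  show "diag B (- i) = - diag B i" for i by (simp add: diag_def)
  show "diag B x \<in> signset m" if "x \<in> signset m" for x using that by (simp add: diag_def signset_iff)
  show "diag B x = x" if "x \<notin> signset m" for x
  proof -
    have "\<bar>x\<bar> \<notin> II m" using that by (auto simp: signset_iff II_iff)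
    then show ?thesis using assms by (auto simp: diag_def)
  qed
qed

lemma Neg_diag: assumes "B \<subseteq> II m" shows "Neg m (inv (diag B)) = B"
proof -
  have "inv (diag B) = diag B"
    by (rule inv_unique_comp) (auto simp: diag_def fun_eq_iff)
  then show ?thesis using assms unfolding Neg_def by (auto simp: diag_def II_iff)
qed

lemma absperm_eq:
  assumes s: "\<sigma> \<in> Bgrp m"
  shows "absperm \<sigma> = diag (Neg m (inv \<sigma>)) \<circ> \<sigma>"
proof
  fix x
  have key: "absperm \<sigma> x = (diag (Neg m (inv \<sigma>)) \<circ> \<sigma>) x" if xi: "x \<in> II m" for x
  proof -
    define y where "y = \<sigma> x"
    have ys: "y \<in> signset m" unfolding y_def by (rule Bgrp_in[OF s II_signset[OF xi]])
    have iy: "inv \<sigma> y = x" unfolding y_def by (rule Bgrp_inv_app[OF s])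
    have ax: "absperm \<sigma> x = \<bar>y\<bar>" using xi by (simp add: absperm_def y_def II_iff)
    show ?thesis
    proof (cases "y > 0")
      case True
      have "\<bar>y\<bar> \<notin> Neg m (inv \<sigma>)" using True iy xi by (auto simp: Neg_def II_iff)
      then show ?thesis using ax True by (simp add: diag_def y_def)
    next
      case False
      then have "y < 0" using ys by (auto simp: signset_iff)
      have "inv \<sigma> (- y) = - x" using iy Bgrp_D(2)[OF Bgrp_inv[OF s]] by simp
      then have "\<bar>y\<bar> \<in> Neg m (inv \<sigma>)" using \<open>y < 0\<close> ys xi by (auto simp: Neg_def II_iff signset_iff)
      then show ?thesis using ax \<open>y < 0\<close> by (simp add: diag_def y_def)
    qed
  qed
  have NB: "Neg m (inv \<sigma>) \<subseteq> II m" by (auto simp: Neg_def II_iff)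
  have DB: "diag (Neg m (inv \<sigma>)) \<circ> \<sigma> \<in> Bgrp m" by (rule Bgrp_comp[OF diag_Bgrp[OF NB] s])
  show "absperm \<sigma> x = (diag (Neg m (inv \<sigma>)) \<circ> \<sigma>) x"
  proof (cases "x \<in> signset m")
    case False
    then have "(diag (Neg m (inv \<sigma>)) \<circ> \<sigma>) x = x" using Bgrp_D(3)[OF DB] by simp
    moreover have "absperm \<sigma> x = x"
    proof (cases "x = 0")
      case True then show ?thesis by (simp add: absperm_def)
    next
      case False
      then have "\<bar>x\<bar> \<notin> signset m" using \<open>x \<notin> signset m\<close> by (auto simp: signset_iff)
      then have "\<sigma> \<bar>x\<bar> = \<bar>x\<bar>" using Bgrp_D(3)[OF s] by simp
      then show ?thesis by (simp add: absperm_def sgn_mult_abs)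
    qed
    ultimately show ?thesis by simp
  next
    case True
    then have "x \<in> II m \<or> - x \<in> II m" by (rule signset_cases)
    then show ?thesis
    proof
      assume "- x \<in> II m"
      then have k: "absperm \<sigma> (- x) = (diag (Neg m (inv \<sigma>)) \<circ> \<sigma>) (- x)" by (rule key)
      have "absperm \<sigma> (- x) = - absperm \<sigma> x" by (simp add: absperm_def)
      moreover have "(diag (Neg m (inv \<sigma>)) \<circ> \<sigma>) (- x) = - (diag (Neg m (inv \<sigma>)) \<circ> \<sigma>) x"
        by (rule Bgrp_D(2)[OF DB])
      ultimately show ?thesis using k by simp
    qed (rule key)
  qed
qed

lemma absperm_Sgrp: assumes s: "\<sigma> \<in> Bgrp m" shows "absperm \<sigma> \<in> Sgrp m"
proof (rule Sgrp_I)
  have NB: "Neg m (inv \<sigma>) \<subseteq> II m" by (auto simp: Neg_def II_iff)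
  show "absperm \<sigma> \<in> Bgrp m" unfolding absperm_eq[OF s] by (rule Bgrp_comp[OF diag_Bgrp[OF NB] s])
  fix x assume x: "x \<in> II m"
  have "\<sigma> x \<in> signset m" by (rule Bgrp_in[OF s II_signset[OF x]])
  then show "absperm \<sigma> x > 0" using x by (auto simp: absperm_def signset_iff II_iff)
qed

lemma absperm_comp:
  assumes s: "\<sigma> \<in> Bgrp m" and u: "u \<in> Sgrp m"
  shows "absperm (\<sigma> \<circ> u) = absperm \<sigma> \<circ> u"
proof
  fix x
  have B: "u \<in> Bgrp m" using u by (rule Sgrp_B)
  show "absperm (\<sigma> \<circ> u) x = (absperm \<sigma> \<circ> u) x"
  proof (cases x "0::int" rule: linorder_cases)
    case less
    then have "u x < 0" using Sgrp_sign(1)[OF u] by simp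
    moreover have "u (- x) = - u x" using Bgrp_D(2)[OF B] by simp
    ultimately show ?thesis using less by (simp add: absperm_def)
  next
    case equal
    have "0 \<notin> signset m" by (simp add: signset_iff)
    then have "u 0 = 0" using Bgrp_D(3)[OF B] by simp
    then show ?thesis using equal by (simp add: absperm_def)
  next
    case greater
    then have "u x > 0" using Sgrp_sign(2)[OF u] by simp
    then show ?thesis using greater by (simp add: absperm_def)
  qed
qed

lemma absperm_S: assumes u: "u \<in> Sgrp m" shows "absperm u = u"
proof
  fix x
  have B: "u \<in> Bgrp m" using u by (rule Sgrp_B)
  show "absperm u x = u x"
  proof (cases x "0::int" rule: linorder_cases)
    case less
    then have "u x < 0" using Sgrp_sign(1)[OF u] by simp
    moreover have "u (- x) = - u x" using Bgrp_D(2)[OF B] by simp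
    ultimately show ?thesis using less by (simp add: absperm_def)
  next
    case equal
    have "0 \<notin> signset m" by (simp add: signset_iff)
    then have "u 0 = 0" using Bgrp_D(3)[OF B] by simp
    then show ?thesis using equal by (simp add: absperm_def)
  next
    case greater
    then have "u x > 0" using Sgrp_sign(2)[OF u] by simp
    then show ?thesis using greater by (simp add: absperm_def)
  qed
qed

definition rr :: "(int \<Rightarrow> int) \<Rightarrow> int \<Rightarrow> int" where
  "rr v = (\<lambda>x. if 0 < x then v x else x)"

lemma rr_comp: assumes u: "u \<in> Sgrp m" shows "rr (v \<circ> u) = rr v \<circ> rr u"
  using Sgrp_sign(2)[OF u] by (auto simp: rr_def fun_eq_iff)

lemma rr_permutation: assumes u: "u \<in> Sgrp m" shows "permutation (rr u)"
proof -
  have B: "u \<in> Bgrp m" using u by (rule Sgrp_B)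
  have into: "u x \<in> II m" if "x \<in> II m" for x
  proof -
    have "u x \<in> signset m" by (rule Bgrp_in[OF B II_signset[OF that]])
    moreover have "u x > 0" using Sgrp_pos[OF u that] .
    ultimately show ?thesis by (auto simp: signset_iff II_iff)
  qed
  have onto: "y \<in> u ` II m" if "y \<in> II m" for y
  proof -
    have "inv u y \<in> signset m" using Bgrp_in[OF Bgrp_inv[OF B] II_signset[OF that]] .
    moreover have "inv u y > 0"
    proof -
      have "\<not> inv u y < 0" using inv_sign[OF u, of y] that by (simp add: II_iff)
      then show ?thesis using \<open>inv u y \<in> signset m\<close> by (auto simp: signset_iff)
    qed
    ultimately have "inv u y \<in> II m" by (auto simp: signset_iff II_iff)
    moreover have "y = u (inv u y)" using Bgrp_app_inv[OF B] by simp
    ultimately show ?thesis by blast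
  qed
  have "bij_betw u (II m) (II m)"
    unfolding bij_betw_def using into onto inj_on_subset[OF Bgrp_inj[OF B]] by blast
  moreover have "\<And>x. x \<in> II m \<Longrightarrow> rr u x = u x" by (simp add: rr_def II_iff)
  ultimately have "bij_betw (rr u) (II m) (II m)" using bij_betw_cong by blast
  moreover have "rr u x = x" if "x \<notin> II m" for x
  proof (cases "0 < x")
    case True
    then have "x \<notin> signset m" using that by (auto simp: signset_iff II_iff)
    then show ?thesis using Bgrp_D(3)[OF B] by (simp add: rr_def)
  qed (simp add: rr_def)
  ultimately have "rr u permutes (II m)" by (rule bij_imp_permutes)
  then show ?thesis using permutation_permutes finite_II by blast
qed

lemma rr_s1: "rr (sgen 1) = Transposition.transpose 1 2"
  by (auto simp: rr_def fun_eq_iff sgen_def Transposition.transpose_def)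

lemma Lset_iff: "\<sigma> \<in> Lset m \<longleftrightarrow> \<sigma> \<in> Bgrp m \<and> evenperm (rr (absperm \<sigma>))"
  unfolding Lset_def Agrp_def rr_def using absperm_Sgrp by auto

lemma Agrp_iff: "u \<in> Agrp m \<longleftrightarrow> u \<in> Sgrp m \<and> evenperm (rr u)"
  unfolding Agrp_def rr_def by auto

lemma even_comp:
  assumes s: "\<sigma> \<in> Bgrp m" and u: "u \<in> Sgrp m"
  shows "evenperm (rr (absperm (\<sigma> \<circ> u))) \<longleftrightarrow> (evenperm (rr (absperm \<sigma>)) \<longleftrightarrow> evenperm (rr u))"
proof -
  have "rr (absperm (\<sigma> \<circ> u)) = rr (absperm \<sigma>) \<circ> rr u"
    unfolding absperm_comp[OF s u] by (rule rr_comp[OF u])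
  then show ?thesis
    using evenperm_comp[OF rr_permutation[OF absperm_Sgrp[OF s]] rr_permutation[OF u]] by simp
qed

lemma Lset_comp_A:
  assumes "\<sigma> \<in> Lset m" "u \<in> Agrp m" shows "\<sigma> \<circ> u \<in> Lset m"
proof -
  have s: "\<sigma> \<in> Bgrp m" "evenperm (rr (absperm \<sigma>))" using assms(1) Lset_iff by auto
  have u: "u \<in> Sgrp m" "evenperm (rr u)" using assms(2) Agrp_iff by auto
  show ?thesis unfolding Lset_iff
    using Bgrp_comp[OF s(1) Sgrp_B[OF u(1)]] even_comp[OF s(1) u(1)] s(2) u(2) by simp
qed

lemma Lset_quot:
  assumes "\<sigma> \<in> Lset m" "\<sigma> \<circ> u \<in> Lset m" "u \<in> Sgrp m" shows "u \<in> Agrp m"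
proof -
  have s: "\<sigma> \<in> Bgrp m" "evenperm (rr (absperm \<sigma>))" using assms(1) Lset_iff by auto
  have "evenperm (rr (absperm (\<sigma> \<circ> u)))" using assms(2) Lset_iff by auto
  then show ?thesis unfolding Agrp_iff using even_comp[OF s(1) assms(3)] s(2) assms(3) by simp
qed

lemma Lset_flip:
  assumes s: "\<sigma> \<in> Bgrp m" and m: "2 \<le> m"
  shows "\<sigma> \<circ> sgen 1 \<in> Lset m \<longleftrightarrow> \<sigma> \<notin> Lset m"
proof -
  have u: "sgen 1 \<in> Sgrp m" using sgen_Sgrp[of 1 m] m by simp
  have "\<not> evenperm (rr (sgen 1))" unfolding rr_s1 by (simp add: evenperm_swap)
  then show ?thesis unfolding Lset_iff using even_comp[OF s u] Bgrp_comp[OF s Sgrp_B[OF u]] s by auto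
qed



definition Inc :: "nat \<Rightarrow> (int \<Rightarrow> int) \<Rightarrow> bool" where
  "Inc m \<tau> = (\<forall>k. 1 \<le> k \<longrightarrow> k + 1 \<le> int m \<longrightarrow> \<tau> k < \<tau> (k + 1))"

lemma s1_vals: "sgen 1 1 = 2" "sgen 1 2 = 1" "k \<ge> 3 \<Longrightarrow> sgen 1 k = k"
  by (simp_all add: sgen_def)

lemma Tcond_Inc:
  assumes s: "\<tau> \<in> Bgrp m" and m: "2 \<le> m" and T: "Tcond m \<tau>"
  shows "Inc m \<tau> \<or> Inc m (\<tau> \<circ> sgen 1)"
proof -
  have inc: "\<And>k. 2 \<le> k \<Longrightarrow> k + 1 \<le> int m \<Longrightarrow> \<tau> k < \<tau> (k + 1)" using T unfolding Tcond_def by blast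
  have t13: "3 \<le> int m \<Longrightarrow> \<tau> 1 < \<tau> 3" using T unfolding Tcond_def by blast
  have ne: "\<tau> 1 \<noteq> \<tau> 2" using Bgrp_neq[OF s, of 1 2] by simp
  show ?thesis
  proof (cases "\<tau> 1 < \<tau> 2")
    case True
    have "Inc m \<tau>" unfolding Inc_def
    proof (intro allI impI)
      fix k :: int assume "1 \<le> k" "k + 1 \<le> int m"
      then show "\<tau> k < \<tau> (k + 1)" using True inc[of k] by (cases "k = 1") auto
    qed
    then show ?thesis by simp
  next
    case False
    then have lt: "\<tau> 2 < \<tau> 1" using ne by simp
    have "Inc m (\<tau> \<circ> sgen 1)" unfolding Inc_def
    proof (intro allI impI)
      fix k :: int assume k: "1 \<le> k" "k + 1 \<le> int m"
      show "(\<tau> \<circ> sgen 1) k < (\<tau> \<circ> sgen 1) (k + 1)"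
      proof (cases "k = 1")
        case True then show ?thesis using lt by (simp add: s1_vals)
      next
        case False
        show ?thesis
        proof (cases "k = 2")
          case True then show ?thesis using t13 k by (simp add: s1_vals)
        next
          case False
          then have "3 \<le> k" using \<open>k \<noteq> 1\<close> k by simp
          then show ?thesis using inc[of k] k by (simp add: s1_vals)
        qed
      qed
    qed
    then show ?thesis by simp
  qed
qed

lemma Inc_Tcond:
  assumes I: "Inc m \<tau>"
  shows "Tcond m \<tau> \<and> Tcond m (\<tau> \<circ> sgen 1)"
proof -
  have inc: "\<And>k. 1 \<le> k \<Longrightarrow> k + 1 \<le> int m \<Longrightarrow> \<tau> k < \<tau> (k + 1)" using I unfolding Inc_def by blast
  have c13: "\<tau> 1 < \<tau> 3" "\<tau> 2 < \<tau> 3" if "3 \<le> int m"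
    using inc[of 1] inc[of 2] that by simp_all
  have "Tcond m \<tau>" unfolding Tcond_def using inc c13 by simp
  moreover have "Tcond m (\<tau> \<circ> sgen 1)" unfolding Tcond_def
  proof (intro conjI allI impI)
    fix k :: int assume k: "2 \<le> k" "k + 1 \<le> int m"
    show "(\<tau> \<circ> sgen 1) k < (\<tau> \<circ> sgen 1) (k + 1)"
    proof (cases "k = 2")
      case True then show ?thesis using c13 k by (simp add: s1_vals)
    next
      case False
      then have "3 \<le> k" using k by simp
      then show ?thesis using inc[of k] k by (simp add: s1_vals)
    qed
  next
    assume "3 \<le> int m"
    then show "(\<tau> \<circ> sgen 1) 1 < (\<tau> \<circ> sgen 1) 3" using c13 by (simp add: s1_vals)
  qed
  ultimately show ?thesis by simp
qed

lemma id_Sgrp: "id \<in> Sgrp m"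
  by (rule Sgrp_I[OF id_Bgrp]) (simp add: II_iff)

lemma Inc_exists:
  assumes B: "B \<subseteq> II m" and m: "1 \<le> m"
  shows "\<exists>\<tau>. \<tau> \<in> Bgrp m \<and> Inc m \<tau> \<and> Neg m (inv \<tau>) = B"
proof -
  let ?d = "diag B"
  have dB: "?d \<in> Bgrp m" by (rule diag_Bgrp[OF B])
  obtain u where u: "u \<in> Sgrp m" and mn: "\<forall>v. v \<in> Sgrp m \<longrightarrow> nat (ninv m (?d \<circ> u)) \<le> nat (ninv m (?d \<circ> v))"
    using ex_has_least_nat[of "\<lambda>v. v \<in> Sgrp m" id "\<lambda>v. nat (ninv m (?d \<circ> v))"] id_Sgrp by blast
  define \<tau> where "\<tau> = ?d \<circ> u"
  have tB: "\<tau> \<in> Bgrp m" unfolding \<tau>_def by (rule Bgrp_comp[OF dB Sgrp_B[OF u]])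
  have "Inc m \<tau>" unfolding Inc_def
  proof (intro allI impI)
    fix k :: int assume k: "1 \<le> k" "k + 1 \<le> int m"
    show "\<tau> k < \<tau> (k + 1)"
    proof (rule ccontr)
      assume "\<not> \<tau> k < \<tau> (k + 1)"
      moreover have "\<tau> k \<noteq> \<tau> (k + 1)" using Bgrp_neq[OF tB, of k "k+1"] by simp
      ultimately have lt: "\<tau> (k + 1) < \<tau> k" by simp
      have v: "u \<circ> sgen k \<in> Sgrp m" by (rule Sgrp_comp[OF u sgen_Sgrp[OF k]])
      have "ninv m (?d \<circ> (u \<circ> sgen k)) = ninv m (\<tau> \<circ> sgen k)" unfolding \<tau>_def by (simp add: comp_assoc)
      also have "\<dots> = ninv m \<tau> - 1" using ninv_swap[OF k, of \<tau>] lt by (simp add: ind_def)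
      finally have "ninv m (?d \<circ> (u \<circ> sgen k)) = ninv m \<tau> - 1" .
      moreover have "nat (ninv m \<tau>) \<le> nat (ninv m (?d \<circ> (u \<circ> sgen k)))" using mn v unfolding \<tau>_def by blast
      moreover have "0 \<le> ninv m (?d \<circ> (u \<circ> sgen k))" by (rule ninv_nonneg)
      ultimately show False by simp
    qed
  qed
  moreover have "Neg m (inv \<tau>) = B" unfolding \<tau>_def Neg_inv_comp[OF dB u] by (rule Neg_diag[OF B])
  ultimately show ?thesis using tB by blast
qed

lemma Sgrp_II: assumes u: "u \<in> Sgrp m" and x: "x \<in> II m" shows "u x \<in> II m"
proof -
  have "u x \<in> signset m" by (rule Bgrp_in[OF Sgrp_B[OF u] II_signset[OF x]])
  moreover have "u x > 0" by (rule Sgrp_pos[OF u x])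
  ultimately show ?thesis by (auto simp: signset_iff II_iff)
qed

lemma Inc_unique:
  assumes s: "\<tau> \<in> Bgrp m" and s': "\<tau>' \<in> Bgrp m" and I: "Inc m \<tau>" and I': "Inc m \<tau>'"
    and N: "Neg m (inv \<tau>) = Neg m (inv \<tau>')" and m: "1 \<le> m"
  shows "\<tau> = \<tau>'"
proof -
  define u where "u = inv \<tau> \<circ> \<tau>'"
  have uS: "u \<in> Sgrp m" unfolding u_def by (rule same_Neg_Sgrp[OF s s' N])
  have tu: "\<tau> (u x) = \<tau>' x" for x unfolding u_def using Bgrp_app_inv[OF s] by simp
  have incT: "\<And>k. 1 \<le> k \<Longrightarrow> k + 1 \<le> int m \<Longrightarrow> \<tau> k < \<tau> (k + 1)" using I unfolding Inc_def by blast
  have "u k < u (k + 1)" if k: "1 \<le> k" "k + 1 \<le> int m" for k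
  proof (rule ccontr)
    assume "\<not> u k < u (k + 1)"
    moreover have "u k \<noteq> u (k + 1)" using Bgrp_neq[OF Sgrp_B[OF uS], of k "k+1"] by simp
    ultimately have lt: "u (k + 1) < u k" by simp
    have "u (k + 1) \<in> II m" "u k \<in> II m" using Sgrp_II[OF uS] k by (auto simp: II_iff)
    then have h1: "1 \<le> u (k + 1)" and h2: "u k \<le> int m" by (auto simp: II_iff)
    have "\<tau> (u (k + 1)) < \<tau> (u k)"
      by (rule chain_lt[where a=1 and b="int m" and f=\<tau>, OF incT h1 lt h2])
    moreover have "\<tau>' k < \<tau>' (k + 1)" using I' k unfolding Inc_def by blast
    ultimately show False unfolding tu by simp
  qed
  moreover have "u 1 > 0" using Sgrp_pos[OF uS] m by (simp add: II_iff)
  ultimately have "u = id" using incr_id[OF Sgrp_B[OF uS] m] by blast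
  then have "\<tau> \<circ> u = \<tau>" by simp
  moreover have "\<tau> \<circ> u = \<tau>'" using tu by (simp add: fun_eq_iff)
  ultimately show ?thesis by simp
qed



lemma Lset_B: "\<sigma> \<in> Lset m \<Longrightarrow> \<sigma> \<in> Bgrp m" by (simp add: Lset_def)

lemma Neg_sub: "Neg m \<sigma> \<subseteq> II m" by (auto simp: Neg_def II_iff)

lemma part1:
  fixes n :: nat and T :: "(int \<Rightarrow> int) set"
  assumes n: "n \<ge> 1" and Tdef: "T = {\<sigma> \<in> Lset (n + 1). desA n \<sigma> = 0}"
  shows "\<forall>B \<subseteq> II (n + 1). \<exists>!\<sigma>. \<sigma> \<in> T \<and> B = Neg (n + 1) (inv \<sigma>)"
proof (intro allI impI)
  let ?m = "n + 1"
  have m2: "2 \<le> ?m" and m1: "1 \<le> ?m" using n by auto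
  have memT: "\<sigma> \<in> T \<longleftrightarrow> \<sigma> \<in> Lset ?m \<and> Tcond ?m \<sigma>" for \<sigma>
  proof -
    have "\<sigma> \<in> Lset ?m \<Longrightarrow> desA n \<sigma> = 0 \<longleftrightarrow> Tcond ?m \<sigma>"
      using desA_zero_iff[OF Lset_B] condS_Tcond by blast
    then show ?thesis unfolding Tdef by blast
  qed
  have s1S: "sgen 1 \<in> Sgrp ?m" using sgen_Sgrp[of 1 ?m] m2 by simp
  fix B assume B: "B \<subseteq> II ?m"
  obtain \<tau> where t: "\<tau> \<in> Bgrp ?m" "Inc ?m \<tau>" "Neg ?m (inv \<tau>) = B"
    using Inc_exists[OF B m1] by blast
  have NS: "Neg ?m (inv (\<tau> \<circ> sgen 1)) = B" using Neg_inv_comp[OF t(1) s1S] t(3) by simp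
  have ex: "\<exists>\<sigma>. \<sigma> \<in> T \<and> B = Neg ?m (inv \<sigma>)"
  proof (cases "\<tau> \<in> Lset ?m")
    case True
    then have "\<tau> \<in> T" using memT Inc_Tcond[OF t(2)] by simp
    then show ?thesis using t(3) by blast
  next
    case False
    then have "\<tau> \<circ> sgen 1 \<in> Lset ?m" using Lset_flip[OF t(1) m2] by simp
    then have "\<tau> \<circ> sgen 1 \<in> T" using memT Inc_Tcond[OF t(2)] by simp
    then show ?thesis using NS by metis
  qed
  have rep: "\<exists>\<rho>. \<rho> \<in> Bgrp ?m \<and> Inc ?m \<rho> \<and> Neg ?m (inv \<rho>) = Neg ?m (inv \<sigma>) \<and> (\<sigma> = \<rho> \<or> \<sigma> = \<rho> \<circ> sgen 1)"
    if "\<sigma> \<in> T" for \<sigma>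
  proof -
    have sB: "\<sigma> \<in> Bgrp ?m" and Tc: "Tcond ?m \<sigma>" using that memT Lset_B by auto
    show ?thesis
    proof (cases "Inc ?m \<sigma>")
      case True then show ?thesis using sB by blast
    next
      case False
      then have I: "Inc ?m (\<sigma> \<circ> sgen 1)" using Tcond_Inc[OF sB m2 Tc] by simp
      have "\<sigma> \<circ> sgen 1 \<circ> sgen 1 = \<sigma>" by (simp add: comp_assoc sgen_sq)
      moreover have "Neg ?m (inv (\<sigma> \<circ> sgen 1)) = Neg ?m (inv \<sigma>)" by (rule Neg_inv_comp[OF sB s1S])
      moreover have "\<sigma> \<circ> sgen 1 \<in> Bgrp ?m" by (rule Bgrp_comp[OF sB Sgrp_B[OF s1S]])
      ultimately show ?thesis using I by metis
    qed
  qed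
  show "\<exists>!\<sigma>. \<sigma> \<in> T \<and> B = Neg ?m (inv \<sigma>)"
  proof (rule ex_ex1I[OF ex])
    fix \<sigma> \<sigma>' assume a: "\<sigma> \<in> T \<and> B = Neg ?m (inv \<sigma>)" and b: "\<sigma>' \<in> T \<and> B = Neg ?m (inv \<sigma>')"
    obtain \<rho> where r: "\<rho> \<in> Bgrp ?m" "Inc ?m \<rho>" "Neg ?m (inv \<rho>) = Neg ?m (inv \<sigma>)" "\<sigma> = \<rho> \<or> \<sigma> = \<rho> \<circ> sgen 1"
      using rep a by blast
    obtain \<rho>' where r': "\<rho>' \<in> Bgrp ?m" "Inc ?m \<rho>'" "Neg ?m (inv \<rho>') = Neg ?m (inv \<sigma>')" "\<sigma>' = \<rho>' \<or> \<sigma>' = \<rho>' \<circ> sgen 1"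
      using rep b by blast
    have "\<rho> = \<rho>'" by (rule Inc_unique[OF r(1) r'(1) r(2) r'(2) _ m1]) (use r(3) r'(3) a b in simp)
    then have o: "\<sigma> = \<rho> \<or> \<sigma> = \<rho> \<circ> sgen 1" "\<sigma>' = \<rho> \<or> \<sigma>' = \<rho> \<circ> sgen 1" using r(4) r'(4) by auto
    have L: "\<sigma> \<in> Lset ?m" "\<sigma>' \<in> Lset ?m" using a b memT by auto
    have fl: "\<rho> \<circ> sgen 1 \<in> Lset ?m \<longleftrightarrow> \<rho> \<notin> Lset ?m" by (rule Lset_flip[OF r(1) m2])
    show "\<sigma> = \<sigma>'" using o L fl by auto
  qed
qed

theorem corollary3p6:
  fixes n :: nat and T :: "(int \<Rightarrow> int) set"
  assumes "n \<ge> 1"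
    and "T = {\<sigma> \<in> Lset (n + 1). desA n \<sigma> = 0}"
  shows "(\<forall>B \<subseteq> {1..int n + 1}. \<exists>!\<sigma>. \<sigma> \<in> T \<and> B = Neg (n + 1) (inv \<sigma>))
    \<and> (\<forall>B \<subseteq> {1..int n + 1}.
          {\<pi> \<in> Lset (n + 1). Neg (n + 1) (inv \<pi>) \<subseteq> B}
            = (\<Union>u \<in> Agrp (n + 1). {\<sigma> \<circ> u | \<sigma>. \<sigma> \<in> T \<and> Neg (n + 1) (inv \<sigma>) \<subseteq> B})
          \<and> disjoint_family_on (\<lambda>u. {\<sigma> \<circ> u | \<sigma>. \<sigma> \<in> T \<and> Neg (n + 1) (inv \<sigma>) \<subseteq> B})
              (Agrp (n + 1)))"
proof -
  let ?m = "n + 1"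
  have IIe: "II ?m = {1..int n + 1}" by (simp add: II_def)
  have P1: "\<forall>B \<subseteq> II ?m. \<exists>!\<sigma>. \<sigma> \<in> T \<and> B = Neg ?m (inv \<sigma>)" by (rule part1[OF assms])
  have TL: "\<sigma> \<in> Lset ?m" if "\<sigma> \<in> T" for \<sigma> using that assms(2) by simp
  have P2: "{\<pi> \<in> Lset ?m. Neg ?m (inv \<pi>) \<subseteq> B}
            = (\<Union>u \<in> Agrp ?m. {\<sigma> \<circ> u | \<sigma>. \<sigma> \<in> T \<and> Neg ?m (inv \<sigma>) \<subseteq> B})
          \<and> disjoint_family_on (\<lambda>u. {\<sigma> \<circ> u | \<sigma>. \<sigma> \<in> T \<and> Neg ?m (inv \<sigma>) \<subseteq> B}) (Agrp ?m)"
    if B: "B \<subseteq> II ?m" for B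
  proof (intro conjI)
    show "{\<pi> \<in> Lset ?m. Neg ?m (inv \<pi>) \<subseteq> B}
            = (\<Union>u \<in> Agrp ?m. {\<sigma> \<circ> u | \<sigma>. \<sigma> \<in> T \<and> Neg ?m (inv \<sigma>) \<subseteq> B})"
    proof (intro equalityI subsetI)
      fix \<pi> assume "\<pi> \<in> {\<pi> \<in> Lset ?m. Neg ?m (inv \<pi>) \<subseteq> B}"
      then have p: "\<pi> \<in> Lset ?m" "Neg ?m (inv \<pi>) \<subseteq> B" by auto
      obtain \<sigma> where s: "\<sigma> \<in> T" "Neg ?m (inv \<pi>) = Neg ?m (inv \<sigma>)"
        using P1 Neg_sub[of ?m "inv \<pi>"] by blast
      have sB: "\<sigma> \<in> Bgrp ?m" using TL[OF s(1)] Lset_B by blast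
      have pB: "\<pi> \<in> Bgrp ?m" using p(1) Lset_B by blast
      define u where "u = inv \<sigma> \<circ> \<pi>"
      have uS: "u \<in> Sgrp ?m" unfolding u_def by (rule same_Neg_Sgrp[OF sB pB s(2)[symmetric]])
      have pu: "\<pi> = \<sigma> \<circ> u" unfolding u_def by (simp add: comp_assoc[symmetric] Bgrp_comp_inv[OF sB])
      have uA: "u \<in> Agrp ?m" by (rule Lset_quot[OF TL[OF s(1)] _ uS]) (use p(1) pu in simp)
      have "\<pi> \<in> {\<sigma> \<circ> u | \<sigma>. \<sigma> \<in> T \<and> Neg ?m (inv \<sigma>) \<subseteq> B}" using s p(2) pu by auto
      then show "\<pi> \<in> (\<Union>u \<in> Agrp ?m. {\<sigma> \<circ> u | \<sigma>. \<sigma> \<in> T \<and> Neg ?m (inv \<sigma>) \<subseteq> B})" using uA by blast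
    next
      fix \<pi> assume "\<pi> \<in> (\<Union>u \<in> Agrp ?m. {\<sigma> \<circ> u | \<sigma>. \<sigma> \<in> T \<and> Neg ?m (inv \<sigma>) \<subseteq> B})"
      then obtain u \<sigma> where h: "u \<in> Agrp ?m" "\<sigma> \<in> T" "Neg ?m (inv \<sigma>) \<subseteq> B" "\<pi> = \<sigma> \<circ> u" by blast
      have uS: "u \<in> Sgrp ?m" using h(1) Agrp_iff by blast
      have sB: "\<sigma> \<in> Bgrp ?m" using TL[OF h(2)] Lset_B by blast
      have "\<pi> \<in> Lset ?m" using Lset_comp_A[OF TL[OF h(2)] h(1)] h(4) by simp
      moreover have "Neg ?m (inv \<pi>) \<subseteq> B" using Neg_inv_comp[OF sB uS] h(3,4) by simp
      ultimately show "\<pi> \<in> {\<pi> \<in> Lset ?m. Neg ?m (inv \<pi>) \<subseteq> B}" by simp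
    qed
    show "disjoint_family_on (\<lambda>u. {\<sigma> \<circ> u | \<sigma>. \<sigma> \<in> T \<and> Neg ?m (inv \<sigma>) \<subseteq> B}) (Agrp ?m)"
      unfolding disjoint_family_on_def
    proof (intro ballI impI)
      fix u u' assume u: "u \<in> Agrp ?m" and u': "u' \<in> Agrp ?m" and ne: "u \<noteq> u'"
      show "{\<sigma> \<circ> u | \<sigma>. \<sigma> \<in> T \<and> Neg ?m (inv \<sigma>) \<subseteq> B} \<inter> {\<sigma> \<circ> u' | \<sigma>. \<sigma> \<in> T \<and> Neg ?m (inv \<sigma>) \<subseteq> B} = {}"
      proof (rule ccontr)
        assume "\<not> ?thesis"
        then obtain \<sigma> \<sigma>' where h: "\<sigma> \<in> T" "\<sigma>' \<in> T" "\<sigma> \<circ> u = \<sigma>' \<circ> u'" by blast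
        have uS: "u \<in> Sgrp ?m" "u' \<in> Sgrp ?m" using u u' Agrp_iff by blast+
        have sB: "\<sigma> \<in> Bgrp ?m" "\<sigma>' \<in> Bgrp ?m" using TL h(1,2) Lset_B by blast+
        have "Neg ?m (inv \<sigma>) = Neg ?m (inv \<sigma>')"
          using Neg_inv_comp[OF sB(1) uS(1)] Neg_inv_comp[OF sB(2) uS(2)] h(3) by simp
        then have "\<sigma> = \<sigma>'" using P1 Neg_sub[of ?m "inv \<sigma>"] h(1,2) by blast
        then have "inv \<sigma> \<circ> (\<sigma> \<circ> u) = inv \<sigma> \<circ> (\<sigma> \<circ> u')" using h(3) by simp
        then have "u = u'" by (simp add: comp_assoc[symmetric] Bgrp_inv_comp[OF sB(1)])
        then show False using ne by simp
      qed
    qed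
  qed
  show ?thesis using P1 P2 unfolding IIe by blast
qed

end
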